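(* Consider ${\sf BubbleRank}$ run for $n$ steps with parameter $\delta\in(0,1)$ and initial base list $\mathcal{R}_0$ in a stochastic click bandit on items $[K]$ satisfying Assumptions A1–A5 below with $\alpha(1)>\dots>\alpha(K)>0$. Then with probability at least $1 - \delta^{1/2}K^2 n$, the displayed lists satisfy $|\mathcal{V}(\mathbf{R}_t)| \le |\mathcal{V}_0| + K/2$ simultaneously for all $t \in [n]$.
   Context: Model. Items are $[K]$; a list $\mathcal{R}$ is an ordering of all $K$ items, $\mathcal{R}(k)$ is the item at position $k$, $\mathcal{R}^{-1}(i)$ the position of item $i$; $\Pi_K$ is the set of lists. At each time $t$, $(\mathbf{A}_t,\mathbf{X}_t)$ with $\mathbf{A}_t\in\{0,1\}^K$, $\mathbf{X}_t\in\{0,1\}^{\Pi_K\times[K]}$ is drawn i.i.d. from a product distribution; the learner chooses $\mathbf{R}_t$ and observes clicks $\mathbf{c}_t(k)=\mathbf{X}_t(\mathbf{R}_t,k)\mathbf{A}_t(\mathbf{R}_t(k))$. $\alpha=\mathbb{E}[\mathbf{A}_t]$, $\chi=\mathbb{E}[\mathbf{X}_t]$, $r(\mathcal{R},\alpha,\chi)=\sum_k\chi(\mathcal{R},k)\alpha(\mathcal{R}(k))$, $\mathcal{R}^*=(1,\dots,K)$. Assumptions, for all lists $\mathcal{R},\mathcal{R}'$ and positions $k<\ell$: (A1) $r(\mathcal{R},\alpha,\chi)\le r(\mathcal{R}^*,\alpha,\chi)$; (A2) $\{\mathcal{R}(1),\dots,\mathcal{R}(k-1)\}=\{\mathcal{R}'(1),\dots,\mathcal{R}'(k-1)\}\Rightarrow\chi(\mathcal{R},k)=\chi(\mathcal{R}',k)$;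 (A3) $\chi(\mathcal{R},k)\ge\chi(\mathcal{R},\ell)$; (A4) if $\mathcal{R},\mathcal{R}'$ differ only by exchanging the items at positions $k,\ell$, then $\alpha(\mathcal{R}(k))\le\alpha(\mathcal{R}(\ell))\iff\chi(\mathcal{R},\ell)\ge\chi(\mathcal{R}',\ell)$; (A5) $\chi(\mathcal{R},k)\ge\chi(\mathcal{R}^*,k)$. $\mathcal{V}(\mathcal{R})=\{(i,j)\in[K]^2: i<j,\ \mathcal{R}^{-1}(i)>\mathcal{R}^{-1}(j)\}$ and $\mathcal{V}_0=\mathcal{V}(\mathcal{R}_0)$. Algorithm ${\sf BubbleRank}$: set $\mathbf{s}_0(i,j)=\mathbf{n}_0(i,j)=0$, $\bar{\mathbf{R}}_1=\mathcal{R}_0$. For $t=1,\dots,n$: $h=t\bmod 2$, $\mathbf{R}_t\leftarrow\bar{\mathbf{R}}_t$; for $k=1,\dots,\lfloor(K-h)/2\rfloor$ with $i=\mathbf{R}_t(2k-1+h)$, $j=\mathbf{R}_t(2k+h)$: if $\mathbf{s}_{t-1}(i,j)\le2\sqrt{\mathbf{n}_{t-1}(i,j)\log(1/\delta)}$, exchange positions $2k-1+h$ and $2k+h$ of $\mathbf{R}_t$ with probability $1/2$. Display $\mathbf{R}_t$, observe $\mathbf{c}_t$. Set $\mathbf{s}_t=\mathbf{s}_{t-1}$, $\mathbf{n}_t=\mathbf{n}_{t-1}$; for each such $k$ with $i=\mathbf{R}_t(2k-1+h)$, $j=\mathbf{R}_t(2k+h)$: if $|\mathbf{c}_t(2k-1+h)-\mathbf{c}_t(2k+h)|=1$,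 add $\mathbf{c}_t(2k-1+h)-\mathbf{c}_t(2k+h)$ to $\mathbf{s}_t(i,j)$, its negative to $\mathbf{s}_t(j,i)$, and $1$ to $\mathbf{n}_t(i,j)$ and $\mathbf{n}_t(j,i)$. Then $\bar{\mathbf{R}}_{t+1}=\bar{\mathbf{R}}_t$ and for $k=1,\dots,K-1$ in order with $i=\bar{\mathbf{R}}_{t+1}(k)$, $j=\bar{\mathbf{R}}_{t+1}(k+1)$: if $\mathbf{s}_t(j,i)>2\sqrt{\mathbf{n}_t(j,i)\log(1/\delta)}$, exchange positions $k,k+1$ of $\bar{\mathbf{R}}_{t+1}$. *)

theory Defs
  imports "HOL-Probability.Probability"
begin

text \<open>Items are 1..K. A list is a Isabelle list R of items; the item at
  (1-indexed) position k is R ! (k-1). Positions are 1-indexed throughout.\<close>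

definition is_list :: "nat \<Rightarrow> nat list \<Rightarrow> bool" where
  "is_list K R \<longleftrightarrow> distinct R \<and> set R = {1..K}"

definition opt_list :: "nat \<Rightarrow> nat list" where
  "opt_list K = [1..<K+1]"

definition item_at :: "nat list \<Rightarrow> nat \<Rightarrow> nat" where
  "item_at R k = R ! (k - 1)"

definition pos :: "nat list \<Rightarrow> nat \<Rightarrow> nat" where
  "pos R i = (LEAST k. R ! k = i) + 1"

definition swap_pos :: "nat list \<Rightarrow> nat \<Rightarrow> nat \<Rightarrow> nat list" where
  "swap_pos R k l = R[k - 1 := R ! (l - 1), l - 1 := R ! (k - 1)]"

definition inv_pairs :: "nat \<Rightarrow> nat list \<Rightarrow> (nat \<times> nat) set" where
  "inv_pairs K R = {(i, j). i \<in> {1..K} \<and> j \<in> {1..K} \<and> i < j \<and> pos R i > pos R j}"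

text \<open>Environment: attraction A with independent Bernoulli(alpha i) coordinates,
  independent of the examination matrix X drawn from the arbitrary distribution DX.\<close>
definition env :: "(nat \<Rightarrow> real) \<Rightarrow> nat \<Rightarrow> (nat list \<Rightarrow> nat \<Rightarrow> bool) pmf
      \<Rightarrow> ((nat \<Rightarrow> bool) \<times> (nat list \<Rightarrow> nat \<Rightarrow> bool)) pmf" where
  "env \<alpha> K DX = pair_pmf (Pi_pmf {1..K} False (\<lambda>i. bernoulli_pmf (\<alpha> i))) DX"

definition chi :: "(nat list \<Rightarrow> nat \<Rightarrow> bool) pmf \<Rightarrow> nat list \<Rightarrow> nat \<Rightarrow> real" where
  "chi DX R k = measure_pmf.prob DX {X. X R k}"

definition reward :: "nat \<Rightarrow> (nat \<Rightarrow> real) \<Rightarrow> (nat list \<Rightarrow> nat \<Rightarrow> bool) pmf \<Rightarrow> nat list \<Rightarrow> real" where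
  "reward K \<alpha> DX R = (\<Sum>k = 1..K. chi DX R k * \<alpha> (item_at R k))"

definition click_assms :: "nat \<Rightarrow> (nat \<Rightarrow> real) \<Rightarrow> (nat list \<Rightarrow> nat \<Rightarrow> bool) pmf \<Rightarrow> bool" where
  "click_assms K \<alpha> DX \<longleftrightarrow>
     (\<forall>R. is_list K R \<longrightarrow> reward K \<alpha> DX R \<le> reward K \<alpha> DX (opt_list K)) \<and>
     (\<forall>R R' k. is_list K R \<longrightarrow> is_list K R' \<longrightarrow> k \<in> {1..K} \<longrightarrow>
        set (take (k - 1) R) = set (take (k - 1) R') \<longrightarrow> chi DX R k = chi DX R' k) \<and>
     (\<forall>R k l. is_list K R \<longrightarrow> 1 \<le> k \<longrightarrow> k < l \<longrightarrow> l \<le> K \<longrightarrow> chi DX R k \<ge> chi DX R l) \<and>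
     (\<forall>R k l. is_list K R \<longrightarrow> 1 \<le> k \<longrightarrow> k < l \<longrightarrow> l \<le> K \<longrightarrow>
        (\<alpha> (item_at R k) \<le> \<alpha> (item_at R l) \<longleftrightarrow> chi DX R l \<ge> chi DX (swap_pos R k l) l)) \<and>
     (\<forall>R k. is_list K R \<longrightarrow> k \<in> {1..K} \<longrightarrow> chi DX R k \<ge> chi DX (opt_list K) k)"

type_synonym stats = "nat \<Rightarrow> nat \<Rightarrow> int"
type_synonym counts = "nat \<Rightarrow> nat \<Rightarrow> nat"
type_synonym br_state = "stats \<times> counts \<times> nat list"

definition conf_rad :: "real \<Rightarrow> nat \<Rightarrow> real" where
  "conf_rad \<delta> m = 2 * sqrt (real m * ln (1 / \<delta>))"

definition rand_pair :: "real \<Rightarrow> nat \<Rightarrow> stats \<Rightarrow> counts \<Rightarrow> nat \<Rightarrow> nat list \<Rightarrow> nat list pmf" where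
  "rand_pair \<delta> h s n k R =
     (let p = 2 * k - 1 + h; q = 2 * k + h; i = item_at R p; j = item_at R q in
      if real_of_int (s i j) \<le> conf_rad \<delta> (n i j)
      then map_pmf (\<lambda>b. if b then swap_pos R p q else R) (bernoulli_pmf (1/2))
      else return_pmf R)"

definition randomize :: "real \<Rightarrow> nat \<Rightarrow> nat \<Rightarrow> stats \<Rightarrow> counts \<Rightarrow> nat list \<Rightarrow> nat list pmf" where
  "randomize \<delta> K h s n Rb =
     fold (\<lambda>k M. bind_pmf M (rand_pair \<delta> h s n k)) [1..<(K - h) div 2 + 1] (return_pmf Rb)"

definition upd_pair :: "nat \<Rightarrow> nat list \<Rightarrow> (nat \<Rightarrow> bool) \<Rightarrow> nat \<Rightarrow> stats \<times> counts \<Rightarrow> stats \<times> counts" where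
  "upd_pair h R c k sn =
     (let p = 2 * k - 1 + h; q = 2 * k + h; i = item_at R p; j = item_at R q;
          s = fst sn; n = snd sn in
      if c p \<noteq> c q then
        (let d = (if c p then 1 else -1 :: int) in
          ((\<lambda>a b. if (a, b) = (i, j) then s i j + d else if (a, b) = (j, i) then s j i - d else s a b),
           (\<lambda>a b. if (a, b) = (i, j) \<or> (a, b) = (j, i) then n a b + 1 else n a b)))
      else (s, n))"

definition bubble_step :: "real \<Rightarrow> stats \<Rightarrow> counts \<Rightarrow> nat \<Rightarrow> nat list \<Rightarrow> nat list" where
  "bubble_step \<delta> s n k R =
     (let i = item_at R k; j = item_at R (k + 1) in
      if real_of_int (s j i) > conf_rad \<delta> (n j i) then swap_pos R k (k + 1) else R)"

definition br_step :: "(nat \<Rightarrow> real) \<Rightarrow> (nat list \<Rightarrow> nat \<Rightarrow> bool) pmf \<Rightarrow> real \<Rightarrow> nat \<Rightarrow> nat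
      \<Rightarrow> br_state \<Rightarrow> (nat list \<times> br_state) pmf" where
  "br_step \<alpha> DX \<delta> K t st =
     (case st of (s, n, Rb) \<Rightarrow>
       (let h = t mod 2 in
        bind_pmf (randomize \<delta> K h s n Rb) (\<lambda>R.
        bind_pmf (env \<alpha> K DX) (\<lambda>(A, X).
          let c = (\<lambda>k. X R k \<and> A (item_at R k));
              sn' = fold (upd_pair h R c) [1..<(K - h) div 2 + 1] (s, n);
              Rb' = fold (bubble_step \<delta> (fst sn') (snd sn')) [1..<K] Rb
          in return_pmf (R, (fst sn', snd sn', Rb'))))))"

primrec br_run :: "(nat \<Rightarrow> real) \<Rightarrow> (nat list \<Rightarrow> nat \<Rightarrow> bool) pmf \<Rightarrow> real \<Rightarrow> nat \<Rightarrow> nat list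
      \<Rightarrow> nat \<Rightarrow> (nat list list \<times> br_state) pmf" where
  "br_run \<alpha> DX \<delta> K R0 0 = return_pmf ([], (\<lambda>_ _. 0, \<lambda>_ _. 0, R0))"
| "br_run \<alpha> DX \<delta> K R0 (Suc t) =
     bind_pmf (br_run \<alpha> DX \<delta> K R0 t) (\<lambda>(Rs, st).
       map_pmf (\<lambda>(R, st'). (Rs @ [R], st')) (br_step \<alpha> DX \<delta> K (Suc t) st))"

definition displayed :: "(nat \<Rightarrow> real) \<Rightarrow> (nat list \<Rightarrow> nat \<Rightarrow> bool) pmf \<Rightarrow> real \<Rightarrow> nat \<Rightarrow> nat list
      \<Rightarrow> nat \<Rightarrow> nat list list pmf" where
  "displayed \<alpha> DX \<delta> K R0 n = map_pmf fst (br_run \<alpha> DX \<delta> K R0 n)"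

end

theory Submission
  imports Defs
begin


lemma is_list_length: "is_list K R \<Longrightarrow> length R = K"
  unfolding is_list_def using distinct_card[of R] by auto

lemma is_list_nth: "is_list K R \<Longrightarrow> m < K \<Longrightarrow> R!m \<in> {1..K}"
  using is_list_length unfolding is_list_def by (metis nth_mem)

lemma is_list_ex: "is_list K R \<Longrightarrow> x \<in> {1..K} \<Longrightarrow> \<exists>m<K. R!m = x"
  using is_list_length unfolding is_list_def by (metis in_set_conv_nth)

lemma pos_nth: "is_list K R \<Longrightarrow> m < K \<Longrightarrow> pos R (R!m) = Suc m"
  unfolding pos_def
proof -
  assume a: "is_list K R" "m < K"
  have d: "distinct R" and L: "length R = K" using a is_list_length unfolding is_list_def by auto
  have "(LEAST k. R ! k = R ! m) = m"
  proof (rule Least_equality)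
    fix y assume y: "R ! y = R ! m"
    show "m \<le> y"
    proof (rule ccontr)
      assume "\<not> m \<le> y"
      then have "y < m" by simp
      then have "y = m" using nth_eq_iff_index_eq[OF d, of y m] y a(2) L by simp
      with \<open>y < m\<close> show False by simp
    qed
  qed simp
  then show "(LEAST k. R ! k = R ! m) + 1 = Suc m" by simp
qed

lemma pos_props: "is_list K R \<Longrightarrow> x \<in> {1..K} \<Longrightarrow> 1 \<le> pos R x \<and> pos R x \<le> K \<and> R!(pos R x - 1) = x"
proof -
  assume a: "is_list K R" "x \<in> {1..K}"
  obtain m where m: "m < K" "R!m = x" using is_list_ex[OF a] by auto
  show ?thesis using pos_nth[OF a(1) m(1)] m by simp
qed

lemma pos_iff: "is_list K R \<Longrightarrow> x \<in> {1..K} \<Longrightarrow> 1 \<le> k \<Longrightarrow> k \<le> K \<Longrightarrow> pos R x = k \<longleftrightarrow> R!(k-1) = x"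
proof -
  assume a: "is_list K R" "x \<in> {1..K}" "1 \<le> k" "k \<le> K"
  have "pos R (R!(k-1)) = k" using pos_nth[OF a(1), of "k-1"] a by simp
  then show ?thesis using pos_props[OF a(1,2)] by auto
qed

lemma swap_nth: "length R = K \<Longrightarrow> 1 \<le> k \<Longrightarrow> k < l \<Longrightarrow> l \<le> K \<Longrightarrow> m < K \<Longrightarrow>
   swap_pos R k l ! m = (if m = k-1 then R!(l-1) else if m = l-1 then R!(k-1) else R!m)"
  unfolding swap_pos_def by (auto simp: nth_list_update)

lemma swap_length[simp]: "length (swap_pos R k l) = length R"
  unfolding swap_pos_def by simp

lemma is_list_swap: "is_list K R \<Longrightarrow> 1 \<le> k \<Longrightarrow> k < l \<Longrightarrow> l \<le> K \<Longrightarrow> is_list K (swap_pos R k l)"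
  using is_list_length[of K R] unfolding is_list_def swap_pos_def
  by auto

lemma swap_swap: "length R = K \<Longrightarrow> 1 \<le> k \<Longrightarrow> k < l \<Longrightarrow> l \<le> K \<Longrightarrow> swap_pos (swap_pos R k l) k l = R"
  by (rule nth_equalityI) (auto simp: swap_nth)

lemma pos_swap_adj:
  assumes R: "is_list K R" and k: "1 \<le> k" "k+1 \<le> K" and x: "x \<in> {1..K}"
  shows "pos (swap_pos R k (k+1)) x = (if x = R!(k-1) then k+1 else if x = R!k then k else pos R x)"
proof -
  let ?R = "swap_pos R k (k+1)"
  have L: "length R = K" using is_list_length[OF R] .
  have R': "is_list K ?R" using is_list_swap[OF R] k by simp
  obtain m where m: "m < K" "R!m = x" using is_list_ex[OF R x] by auto
  have d: "distinct R" using R unfolding is_list_def by simp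
  show ?thesis
  proof (cases "m = k-1")
    case True
    then have "?R ! k = x" using swap_nth[OF L, of k "k+1" k] k m by auto
    then show ?thesis using pos_nth[OF R', of k] k m True by auto
  next
    case F1: False
    show ?thesis
    proof (cases "m = k")
      case True
      then have "?R ! (k-1) = x" using swap_nth[OF L, of k "k+1" "k-1"] k m by auto
      have "R!k \<noteq> R!(k-1)" using d L k by (auto simp: nth_eq_iff_index_eq)
      then show ?thesis using pos_nth[OF R', of "k-1"] k m True F1 \<open>?R ! (k-1) = x\<close> by auto
    next
      case False
      then have "?R ! m = x" using swap_nth[OF L, of k "k+1" m] k m F1 by auto
      moreover have "x \<noteq> R!(k-1)" "x \<noteq> R!k" using F1 False m k d L
        by (auto simp: nth_eq_iff_index_eq)
      ultimately show ?thesis using pos_nth[OF R', of m] pos_nth[OF R, of m] m by auto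
    qed
  qed
qed

lemma inv_swap_adj:
  assumes R: "is_list K R" and k: "1 \<le> k" "k+1 \<le> K"
  defines "i \<equiv> R!(k-1)" and "j \<equiv> R!k"
  shows "inv_pairs K (swap_pos R k (k+1)) \<subseteq> inv_pairs K R \<union> {(min i j, max i j)}"
    and "j < i \<Longrightarrow> inv_pairs K (swap_pos R k (k+1)) \<subseteq> inv_pairs K R"
proof -
  have pi: "pos R i = k" using pos_nth[OF R, of "k-1"] k unfolding i_def by auto
  have pj: "pos R j = k+1" using pos_nth[OF R, of "k"] k unfolding j_def by auto
  have ij: "i \<in> {1..K}" "j \<in> {1..K}" using is_list_nth[OF R] k unfolding i_def j_def by auto
  have oth: "pos R z \<noteq> k \<and> pos R z \<noteq> k+1" if "z \<in> {1..K}" "z \<noteq> i" "z \<noteq> j" for z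
    using pos_iff[OF R that(1)] that k unfolding i_def j_def by auto
  have ps: "pos (swap_pos R k (k+1)) x = (if x = i then k+1 else if x = j then k else pos R x)"
    if "x \<in> {1..K}" for x using pos_swap_adj[OF R k that] unfolding i_def j_def by simp
  have ne: "i \<noteq> j" using pi pj by auto
  show "inv_pairs K (swap_pos R k (k+1)) \<subseteq> inv_pairs K R \<union> {(min i j, max i j)}"
  proof
    fix p assume p: "p \<in> inv_pairs K (swap_pos R k (k+1))"
    obtain x y where xy: "p = (x,y)" by fastforce
    have xy2: "x \<in> {1..K}" "y \<in> {1..K}" "x < y" "pos (swap_pos R k (k+1)) x > pos (swap_pos R k (k+1)) y"
      using p xy unfolding inv_pairs_def by auto
    show "p \<in> inv_pairs K R \<union> {(min i j, max i j)}"
      using xy2 ps[OF xy2(1)] ps[OF xy2(2)] oth[OF xy2(1)] oth[OF xy2(2)] pi pj ne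
      unfolding xy inv_pairs_def by (auto split: if_splits)
  qed
  assume ji: "j < i"
  show "inv_pairs K (swap_pos R k (k+1)) \<subseteq> inv_pairs K R"
  proof
    fix p assume p: "p \<in> inv_pairs K (swap_pos R k (k+1))"
    obtain x y where xy: "p = (x,y)" by fastforce
    have xy2: "x \<in> {1..K}" "y \<in> {1..K}" "x < y" "pos (swap_pos R k (k+1)) x > pos (swap_pos R k (k+1)) y"
      using p xy unfolding inv_pairs_def by auto
    show "p \<in> inv_pairs K R"
      using xy2 ps[OF xy2(1)] ps[OF xy2(2)] oth[OF xy2(1)] oth[OF xy2(2)] pi pj ne ji
      unfolding xy inv_pairs_def by (auto split: if_splits)
  qed
qed

lemma finite_inv: "finite (inv_pairs K R)"
  by (rule finite_subset[of _ "{1..K} \<times> {1..K}"]) (auto simp: inv_pairs_def)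

lemma card_inv_swap_adj:
  assumes R: "is_list K R" and k: "1 \<le> k" "k+1 \<le> K"
  shows "card (inv_pairs K (swap_pos R k (k+1))) \<le> card (inv_pairs K R) + 1"
proof -
  have "card (inv_pairs K (swap_pos R k (k+1))) \<le> card (inv_pairs K R \<union> {(min (R!(k-1)) (R!k), max (R!(k-1)) (R!k))})"
    by (rule card_mono) (use inv_swap_adj(1)[OF R k] finite_inv in auto)
  also have "\<dots> \<le> card (inv_pairs K R) + card {(min (R!(k-1)) (R!k), max (R!(k-1)) (R!k))}"
    by (rule card_Un_le)
  finally show ?thesis by simp
qed



definition good_stats :: "nat \<Rightarrow> real \<Rightarrow> stats \<Rightarrow> counts \<Rightarrow> bool" where
  "good_stats K \<delta> s n \<longleftrightarrow> (\<forall>a b. 1 \<le> a \<longrightarrow> a < b \<longrightarrow> b \<le> K \<longrightarrow> real_of_int (s b a) \<le> conf_rad \<delta> (n b a))"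

lemma bubble_step_ok:
  assumes g: "good_stats K \<delta> s n" and R: "is_list K R" and k: "1 \<le> k" "k < K"
  shows "is_list K (bubble_step \<delta> s n k R) \<and> inv_pairs K (bubble_step \<delta> s n k R) \<subseteq> inv_pairs K R"
proof (cases "real_of_int (s (R!k) (R!(k-1))) > conf_rad \<delta> (n (R!k) (R!(k-1)))")
  case True
  have ij: "R!(k-1) \<in> {1..K}" "R!k \<in> {1..K}" using is_list_nth[OF R] k by auto
  have ne: "R!(k-1) \<noteq> R!k" using R k is_list_length[OF R] unfolding is_list_def
    by (auto simp: nth_eq_iff_index_eq)
  have "\<not> R!(k-1) < R!k" using g True ij unfolding good_stats_def by force
  then have lt: "R!k < R!(k-1)" using ne by simp
  have e: "bubble_step \<delta> s n k R = swap_pos R k (k+1)"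
    using True unfolding bubble_step_def item_at_def by simp
  show ?thesis unfolding e using inv_swap_adj(2)[OF R k(1), of] lt k is_list_swap[OF R, of k "k+1"] by simp
next
  case False
  then have e: "bubble_step \<delta> s n k R = R" unfolding bubble_step_def item_at_def by simp
  show ?thesis unfolding e using R by simp
qed

lemma bubble_fold_ok:
  assumes g: "good_stats K \<delta> s n"
  shows "is_list K R \<Longrightarrow> set ks \<subseteq> {1..<K} \<Longrightarrow>
     is_list K (fold (bubble_step \<delta> s n) ks R) \<and> inv_pairs K (fold (bubble_step \<delta> s n) ks R) \<subseteq> inv_pairs K R"
proof (induction ks arbitrary: R)
  case Nil then show ?case by simp
next
  case (Cons k ks)
  have k: "1 \<le> k" "k < K" using Cons.prems by auto
  have 1: "is_list K (bubble_step \<delta> s n k R) \<and> inv_pairs K (bubble_step \<delta> s n k R) \<subseteq> inv_pairs K R"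
    by (rule bubble_step_ok[OF g Cons.prems(1) k])
  then show ?case using Cons.IH[of "bubble_step \<delta> s n k R"] Cons.prems by auto
qed

lemma fold_bind_pmf:
  "fold (\<lambda>k M. bind_pmf M (g k)) ks M = bind_pmf M (\<lambda>x. fold (\<lambda>k M. bind_pmf M (g k)) ks (return_pmf x))"
proof (induction ks arbitrary: M)
  case Nil then show ?case by (simp add: bind_return_pmf')
next
  case (Cons k ks)
  have "fold (\<lambda>k M. bind_pmf M (g k)) (k # ks) M = fold (\<lambda>k M. bind_pmf M (g k)) ks (bind_pmf M (g k))" by simp
  also have "\<dots> = bind_pmf (bind_pmf M (g k)) (\<lambda>x. fold (\<lambda>k M. bind_pmf M (g k)) ks (return_pmf x))"
    by (rule Cons.IH)
  also have "\<dots> = bind_pmf M (\<lambda>y. bind_pmf (g k y) (\<lambda>x. fold (\<lambda>k M. bind_pmf M (g k)) ks (return_pmf x)))"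
    by (simp add: bind_assoc_pmf)
  also have "\<dots> = bind_pmf M (\<lambda>y. fold (\<lambda>k M. bind_pmf M (g k)) (k#ks) (return_pmf y))"
    using Cons.IH[of "g k _"] by (simp add: bind_return_pmf)
  finally show ?case .
qed

lemma fold_bind_Cons:
  "fold (\<lambda>k M. bind_pmf M (g k)) (k#ks) (return_pmf x) = bind_pmf (g k x) (\<lambda>y. fold (\<lambda>k M. bind_pmf M (g k)) ks (return_pmf y))"
  by (simp add: bind_return_pmf fold_bind_pmf[of g ks "g k x"])

lemma rand_pair_set:
  "R' \<in> set_pmf (rand_pair \<delta> h s n k R) \<Longrightarrow> R' = R \<or> R' = swap_pos R (2*k-1+h) (2*k+h)"
  unfolding rand_pair_def Let_def by (auto split: if_splits)

lemma randomize_support: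
  "is_list K R \<Longrightarrow> (\<forall>k\<in>set ks. 1 \<le> k \<and> 2*k+h \<le> K) \<Longrightarrow>
   R' \<in> set_pmf (fold (\<lambda>k M. bind_pmf M (rand_pair \<delta> h s n k)) ks (return_pmf R)) \<Longrightarrow>
   is_list K R' \<and> card (inv_pairs K R') \<le> card (inv_pairs K R) + length ks"
proof (induction ks arbitrary: R)
  case Nil then show ?case by simp
next
  case (Cons k ks)
  from Cons.prems(3) obtain x where x: "x \<in> set_pmf (rand_pair \<delta> h s n k R)"
    and R': "R' \<in> set_pmf (fold (\<lambda>k M. bind_pmf M (rand_pair \<delta> h s n k)) ks (return_pmf x))"
    unfolding fold_bind_Cons by auto
  have k: "1 \<le> k" "2*k+h \<le> K" using Cons.prems(2) by auto
  have xx: "is_list K x \<and> card (inv_pairs K x) \<le> card (inv_pairs K R) + 1"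
  proof (cases "x = R")
    case True then show ?thesis using Cons.prems by simp
  next
    case False
    then have e: "x = swap_pos R (2*k-1+h) ((2*k-1+h)+1)" using rand_pair_set[OF x] k by simp
    show ?thesis unfolding e
      using is_list_swap[OF Cons.prems(1), of "2*k-1+h" "2*k-1+h+1"] card_inv_swap_adj[OF Cons.prems(1), of "2*k-1+h"] k
      by simp
  qed
  have "is_list K R' \<and> card (inv_pairs K R') \<le> card (inv_pairs K x) + length ks"
    by (rule Cons.IH) (use xx Cons.prems(2) R' in auto)
  then show ?case using xx by simp
qed

lemma randomize_ok:
  assumes "is_list K Rb" "h \<le> 1" "R \<in> set_pmf (randomize \<delta> K h s n Rb)"
  shows "is_list K R" "real (card (inv_pairs K R)) \<le> real (card (inv_pairs K Rb)) + real K / 2"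
proof -
  have "is_list K R \<and> card (inv_pairs K R) \<le> card (inv_pairs K Rb) + length [1..<(K - h) div 2 + 1]"
    by (rule randomize_support[where K=K and R=Rb and h=h and \<delta>=\<delta> and s=s and n=n]) (use assms in \<open>auto simp: randomize_def\<close>)
  moreover have "real ((K - h) div 2) \<le> real K / 2" by linarith
  moreover have "length [1..<(K - h) div 2 + 1] = (K - h) div 2" by simp
  ultimately show "is_list K R" "real (card (inv_pairs K R)) \<le> real (card (inv_pairs K Rb)) + real K / 2"
  proof -
    assume a: "is_list K R \<and> card (inv_pairs K R) \<le> card (inv_pairs K Rb) + length [1..<(K - h) div 2 + 1]"
      "real ((K - h) div 2) \<le> real K / 2" "length [1..<(K - h) div 2 + 1] = (K - h) div 2"
    then have "real (card (inv_pairs K R)) \<le> real (card (inv_pairs K Rb)) + real ((K - h) div 2)"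
      by (simp only: of_nat_add[symmetric] of_nat_le_iff)
    then show "is_list K R" "real (card (inv_pairs K R)) \<le> real (card (inv_pairs K Rb)) + real K / 2"
      using a by auto
  qed
qed



definition cs :: "nat \<Rightarrow> nat list \<Rightarrow> (nat \<Rightarrow> bool) \<Rightarrow> nat \<Rightarrow> nat \<Rightarrow> nat \<Rightarrow> int" where
  "cs h R c x y k = (let p = 2 * k - 1 + h; q = 2 * k + h; i = item_at R p; j = item_at R q in
     if c p \<noteq> c q then (if (i, j) = (x, y) then (if c p then 1 else -1)
        else if (i, j) = (y, x) then - (if c p then 1 else -1) else 0) else 0)"

definition cn :: "nat \<Rightarrow> nat list \<Rightarrow> (nat \<Rightarrow> bool) \<Rightarrow> nat \<Rightarrow> nat \<Rightarrow> nat \<Rightarrow> nat" where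
  "cn h R c x y k = (let p = 2 * k - 1 + h; q = 2 * k + h; i = item_at R p; j = item_at R q in
     if c p \<noteq> c q \<and> ((i, j) = (x, y) \<or> (i, j) = (y, x)) then 1 else 0)"

lemma upd_pair_fst: "fst (upd_pair h R c k (s, n)) x y = s x y + cs h R c x y k"
proof -
  define p where "p = 2 * k - 1 + h"
  define q where "q = 2 * k + h"
  define i where "i = item_at R p"
  define j where "j = item_at R q"
  have e: "upd_pair h R c k (s, n) = (if c p \<noteq> c q then
        (let d = (if c p then 1 else -1 :: int) in
          ((\<lambda>a b. if (a, b) = (i, j) then s i j + d else if (a, b) = (j, i) then s j i - d else s a b),
           (\<lambda>a b. if (a, b) = (i, j) \<or> (a, b) = (j, i) then n a b + 1 else n a b)))
      else (s, n))"
    unfolding upd_pair_def p_def q_def i_def j_def Let_def by (simp only: fst_conv snd_conv)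
  have c: "cs h R c x y k = (if c p \<noteq> c q then (if (i, j) = (x, y) then (if c p then 1 else -1)
        else if (i, j) = (y, x) then - (if c p then 1 else -1) else 0) else 0)"
    unfolding cs_def p_def q_def i_def j_def Let_def by (rule refl)
  show ?thesis unfolding e c Let_def by auto
qed

lemma upd_pair_snd: "snd (upd_pair h R c k (s, n)) x y = n x y + cn h R c x y k"
proof -
  define p where "p = 2 * k - 1 + h"
  define q where "q = 2 * k + h"
  define i where "i = item_at R p"
  define j where "j = item_at R q"
  have e: "upd_pair h R c k (s, n) = (if c p \<noteq> c q then
        (let d = (if c p then 1 else -1 :: int) in
          ((\<lambda>a b. if (a, b) = (i, j) then s i j + d else if (a, b) = (j, i) then s j i - d else s a b),
           (\<lambda>a b. if (a, b) = (i, j) \<or> (a, b) = (j, i) then n a b + 1 else n a b)))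
      else (s, n))"
    unfolding upd_pair_def p_def q_def i_def j_def Let_def by (simp only: fst_conv snd_conv)
  have c: "cn h R c x y k = (if c p \<noteq> c q \<and> ((i, j) = (x, y) \<or> (i, j) = (y, x)) then 1 else 0)"
    unfolding cn_def p_def q_def i_def j_def Let_def by (rule refl)
  show ?thesis unfolding e c Let_def by auto
qed

lemma upd_fold:
  "fold (upd_pair h R c) ks (s, n) = (s', n') \<Longrightarrow>
   s' x y = s x y + (\<Sum>k\<leftarrow>ks. cs h R c x y k) \<and> n' x y = n x y + (\<Sum>k\<leftarrow>ks. cn h R c x y k)"
proof (induction ks arbitrary: s n)
  case Nil then show ?case by simp
next
  case (Cons k ks)
  obtain s1 n1 where e: "upd_pair h R c k (s, n) = (s1, n1)" by fastforce
  have e1: "s1 = fst (upd_pair h R c k (s, n))" "n1 = snd (upd_pair h R c k (s, n))" using e by auto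
  have 1: "s1 x y = s x y + cs h R c x y k \<and> n1 x y = n x y + cn h R c x y k"
    unfolding e1 upd_pair_fst upd_pair_snd by simp
  have "s' x y = s1 x y + (\<Sum>k\<leftarrow>ks. cs h R c x y k) \<and> n' x y = n1 x y + (\<Sum>k\<leftarrow>ks. cn h R c x y k)"
    by (rule Cons.IH) (use Cons.prems e in simp)
  then show ?case using 1 by simp
qed

definition adj :: "nat \<Rightarrow> nat \<Rightarrow> nat list \<Rightarrow> nat \<Rightarrow> nat \<Rightarrow> bool" where
  "adj K h R a b \<longleftrightarrow> (\<exists>k\<in>{1..(K - h) div 2}. {R!(2*k-2+h), R!(2*k-1+h)} = {a, b})"

lemma cs_eval:
  assumes "1 \<le> k" "R!(2*k-2+h) = i" "R!(2*k-1+h) = j"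
  shows "cs h R c x y k = (if c (2*k-1+h) \<noteq> c (2*k+h) then (if (i, j) = (x, y) then (if c (2*k-1+h) then 1 else -1)
        else if (i, j) = (y, x) then - (if c (2*k-1+h) then 1 else -1) else 0) else 0)"
    and "cn h R c x y k = (if c (2*k-1+h) \<noteq> c (2*k+h) \<and> ((i, j) = (x, y) \<or> (i, j) = (y, x)) then 1 else 0)"
proof -
  have e: "2*k-1+h-1 = 2*k-2+h" "2*k+h-1 = 2*k-1+h" using assms(1) by auto
  show "cs h R c x y k = (if c (2*k-1+h) \<noteq> c (2*k+h) then (if (i, j) = (x, y) then (if c (2*k-1+h) then 1 else -1)
        else if (i, j) = (y, x) then - (if c (2*k-1+h) then 1 else -1) else 0) else 0)"
    unfolding cs_def Let_def item_at_def e assms(2,3) ..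
  show "cn h R c x y k = (if c (2*k-1+h) \<noteq> c (2*k+h) \<and> ((i, j) = (x, y) \<or> (i, j) = (y, x)) then 1 else 0)"
    unfolding cn_def Let_def item_at_def e assms(2,3) ..
qed

lemma cs_cn_zero:
  assumes "{R!(2*k-2+h), R!(2*k-1+h)} \<noteq> {x, y}" "1 \<le> k"
  shows "cs h R c x y k = 0" "cn h R c x y k = 0"
proof -
  have e: "2*k-1+h-1 = 2*k-2+h" "2*k+h-1 = 2*k-1+h" using assms(2) by auto
  show "cs h R c x y k = 0" "cn h R c x y k = 0"
  proof -
    have n1: "(R!(2*k-2+h), R!(2*k-1+h)) \<noteq> (x, y)" "(R!(2*k-2+h), R!(2*k-1+h)) \<noteq> (y, x)"
      using assms(1) by auto
    show "cs h R c x y k = 0"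
      unfolding cs_eval[OF assms(2) refl refl] by (simp only: if_not_P[OF n1(1)] if_not_P[OF n1(2)] if_cancel)
    have n2: "\<not> (c (2*k-1+h) \<noteq> c (2*k+h) \<and> ((R!(2*k-2+h), R!(2*k-1+h)) = (x, y) \<or> (R!(2*k-2+h), R!(2*k-1+h)) = (y, x)))"
      using n1 by blast
    show "cn h R c x y k = 0"
      unfolding cs_eval[OF assms(2) refl refl] by (simp only: if_not_P[OF n2])
  qed
qed

lemma adj_unique:
  assumes R: "is_list K R" and h: "h \<le> 1"
    and k: "k \<in> {1..(K - h) div 2}" and k': "k' \<in> {1..(K - h) div 2}"
    and e: "{R!(2*k-2+h), R!(2*k-1+h)} = {R!(2*k'-2+h), R!(2*k'-1+h)}"
  shows "k = k'"
proof -
  have d: "distinct R" and L: "length R = K" using R is_list_length unfolding is_list_def by auto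
  have b: "2*k-1+h < K" "2*k'-1+h < K" "2*k-2+h < K" "2*k'-2+h < K" using k k' h by auto
  have inj: "R!i = R!j \<longleftrightarrow> i = j" if "i < K" "j < K" for i j
    using nth_eq_iff_index_eq[OF d] that L by simp
  from e have "(R!(2*k-2+h) = R!(2*k'-2+h) \<and> R!(2*k-1+h) = R!(2*k'-1+h)) \<or>
     (R!(2*k-2+h) = R!(2*k'-1+h) \<and> R!(2*k-1+h) = R!(2*k'-2+h))"
    by (auto simp: doubleton_eq_iff)
  then have "(2*k-2+h = 2*k'-2+h \<and> 2*k-1+h = 2*k'-1+h) \<or> (2*k-2+h = 2*k'-1+h \<and> 2*k-1+h = 2*k'-2+h)"
    unfolding inj[OF b(3) b(4)] inj[OF b(1) b(2)] inj[OF b(3) b(2)] inj[OF b(1) b(4)] .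
  then show ?thesis using k k' by auto
qed

lemma upd_pair_adj:
  assumes R: "is_list K R" and h: "h \<le> 1" and ab: "a \<in> {1..K}" "b \<in> {1..K}" "a \<noteq> b"
    and f: "fold (upd_pair h R c) [1..<(K - h) div 2 + 1] (s, n) = (s', n')"
  shows "s' b a = s b a + (if adj K h R a b then of_bool (c (pos R b)) - of_bool (c (pos R a)) else 0)"
    and "n' b a = n b a + (if adj K h R a b \<and> c (pos R b) \<noteq> c (pos R a) then 1 else 0)"
proof -
  let ?M = "(K - h) div 2"
  have set: "set [1..<?M + 1] = {1..?M}" by auto
  have u: "s' b a = s b a + (\<Sum>k\<in>{1..?M}. cs h R c b a k) \<and> n' b a = n b a + (\<Sum>k\<in>{1..?M}. cn h R c b a k)"
    using upd_fold[OF f, of b a] unfolding interv_sum_list_conv_sum_set_nat set by simp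
  have "(\<Sum>k\<in>{1..?M}. cs h R c b a k) = (if adj K h R a b then of_bool (c (pos R b)) - of_bool (c (pos R a)) else 0)
    \<and> (\<Sum>k\<in>{1..?M}. cn h R c b a k) = (if adj K h R a b \<and> c (pos R b) \<noteq> c (pos R a) then 1 else 0)"
  proof (cases "adj K h R a b")
    case True
    then obtain k0 where k0: "k0 \<in> {1..?M}" "{R!(2*k0-2+h), R!(2*k0-1+h)} = {a, b}"
      unfolding adj_def by auto
    have oth: "cs h R c b a k = 0 \<and> cn h R c b a k = 0" if "k \<in> {1..?M} - {k0}" for k
    proof -
      have "{R!(2*k-2+h), R!(2*k-1+h)} \<noteq> {b, a}"
      proof
        assume eq: "{R!(2*k-2+h), R!(2*k-1+h)} = {b, a}"
        have ba: "{b, a} = {a, b}" by blast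
        have "k0 = k" using adj_unique[OF R h k0(1), of k] that k0(2) eq ba by simp
        then show False using that by simp
      qed
      then show ?thesis using cs_cn_zero[of R k h b a c] that by auto
    qed
    have s10: "sum (cs h R c b a) ({1..?M} - {k0}) = 0" by (rule sum.neutral) (use oth in auto)
    have s1: "(\<Sum>k\<in>{1..?M}. cs h R c b a k) = cs h R c b a k0"
      using sum.remove[of "{1..?M}" k0 "cs h R c b a"] k0(1) s10 by simp
    have s20: "sum (cn h R c b a) ({1..?M} - {k0}) = 0" by (rule sum.neutral) (use oth in auto)
    have s2: "(\<Sum>k\<in>{1..?M}. cn h R c b a k) = cn h R c b a k0"
      using sum.remove[of "{1..?M}" k0 "cn h R c b a"] k0(1) s20 by simp
    let ?p = "2*k0-1+h" let ?q = "2*k0+h"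
    have pq: "?p - 1 = 2*k0-2+h" "?q - 1 = 2*k0-1+h" "1 \<le> ?p" "?q \<le> K" "?q = ?p + 1"
      using k0(1) h by auto
    have i1: "2*k0-2+h < K" "2*k0-1+h < K" "Suc (2*k0-2+h) = ?p" "Suc (2*k0-1+h) = ?q"
      using k0(1) h by auto
    have pp: "pos R (R!(2*k0-2+h)) = ?p" "pos R (R!(2*k0-1+h)) = ?q"
      by (simp only: pos_nth[OF R i1(1)] i1(3), simp only: pos_nth[OF R i1(2)] i1(4))
    have "(R!(2*k0-2+h) = b \<and> R!(2*k0-1+h) = a) \<or> (R!(2*k0-2+h) = a \<and> R!(2*k0-1+h) = b)"
      using k0(2) ab(3) by (auto simp: doubleton_eq_iff)
    then have "cs h R c b a k0 = of_bool (c (pos R b)) - of_bool (c (pos R a)) \<and>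
               cn h R c b a k0 = (if c (pos R b) \<noteq> c (pos R a) then 1 else 0)"
    proof
      assume A: "R!(2*k0-2+h) = b \<and> R!(2*k0-1+h) = a"
      then have "pos R b = ?p" "pos R a = ?q" using pp by auto
      have k1: "1 \<le> k0" using k0(1) by simp
      show ?thesis unfolding cs_eval[OF k1 conjunct1[OF A] conjunct2[OF A]] \<open>pos R b = ?p\<close> \<open>pos R a = ?q\<close>
        using ab(3) by (cases "c ?p"; cases "c ?q"; simp)
    next
      assume A: "R!(2*k0-2+h) = a \<and> R!(2*k0-1+h) = b"
      then have "pos R a = ?p" "pos R b = ?q" using pp by auto
      have k1: "1 \<le> k0" using k0(1) by simp
      show ?thesis unfolding cs_eval[OF k1 conjunct1[OF A] conjunct2[OF A]] \<open>pos R b = ?q\<close> \<open>pos R a = ?p\<close>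
        using ab(3) by (cases "c ?p"; cases "c ?q"; simp)
    qed
    then show ?thesis using s1 s2 True by simp
  next
    case False
    then have "cs h R c b a k = 0 \<and> cn h R c b a k = 0" if "k \<in> {1..?M}" for k
    proof -
      have ba: "{b, a} = {a, b}" by blast
      have "{R!(2*k-2+h), R!(2*k-1+h)} \<noteq> {b, a}" using False that unfolding adj_def ba by blast
      then show ?thesis using cs_cn_zero[of R k h b a c] that by simp
    qed
    then show ?thesis using False by simp
  qed
  then show "s' b a = s b a + (if adj K h R a b then of_bool (c (pos R b)) - of_bool (c (pos R a)) else 0)"
    and "n' b a = n b a + (if adj K h R a b \<and> c (pos R b) \<noteq> c (pos R a) then 1 else 0)"
    using u by auto
qed



lemma integral_bind_pmf_bdd:
  fixes f :: "'b \<Rightarrow> real"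
  assumes "\<And>x. \<bar>f x\<bar> \<le> B"
  shows "measure_pmf.expectation (bind_pmf M N) f = measure_pmf.expectation M (\<lambda>x. measure_pmf.expectation (N x) f)"
  unfolding measure_pmf_bind
  by (rule integral_bind[where K="count_space UNIV" and B=B and B'=1])
     (use assms measurable_measure_pmf[of N] in \<open>auto intro: measure_pmf.finite_measure_axioms simp: measure_pmf.emeasure_space_1\<close>)

lemma take_swap_set:
  assumes L: "length R = K" and p: "1 \<le> p" "p+1 \<le> K" and m: "p+1 \<le> m \<or> m \<le> p-1"
  shows "set (take m (swap_pos R p (p+1))) = set (take m R)"
  using m
proof
  assume m: "m \<le> p - 1"
  show ?thesis unfolding swap_pos_def using m by (simp add: take_update_cancel)
next
  assume m: "p + 1 \<le> m"
  have e: "take m (swap_pos R p (p+1)) = (take m R)[p-1 := (take m R)!p, p := (take m R)!(p-1)]"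
    unfolding swap_pos_def using m p by (simp add: take_update_swap)
  show ?thesis unfolding e by (rule set_swap) (use m p L in auto)
qed

locale br_env =
  fixes K :: nat and \<alpha> :: "nat \<Rightarrow> real" and DX :: "(nat list \<Rightarrow> nat \<Rightarrow> bool) pmf" and \<delta> :: real
  assumes \<delta>0: "0 < \<delta>" and \<delta>1: "\<delta> < 1"
    and amono: "\<And>i j. 1 \<le> i \<Longrightarrow> i < j \<Longrightarrow> j \<le> K \<Longrightarrow> \<alpha> i > \<alpha> j"
    and apos: "\<And>i. i \<in> {1..K} \<Longrightarrow> 0 < \<alpha> i \<and> \<alpha> i \<le> 1"
    and CA: "click_assms K \<alpha> DX"
begin

lemma chi_nonneg: "0 \<le> chi DX R k" unfolding chi_def by simp
lemma chi_le1: "chi DX R k \<le> 1" unfolding chi_def by simp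

lemma A2: "is_list K R \<Longrightarrow> is_list K R' \<Longrightarrow> k \<in> {1..K} \<Longrightarrow>
   set (take (k - 1) R) = set (take (k - 1) R') \<Longrightarrow> chi DX R k = chi DX R' k"
  using CA unfolding click_assms_def by blast

lemma A3: "is_list K R \<Longrightarrow> 1 \<le> k \<Longrightarrow> k < l \<Longrightarrow> l \<le> K \<Longrightarrow> chi DX R l \<le> chi DX R k"
  using CA unfolding click_assms_def by blast

lemma A4: "is_list K R \<Longrightarrow> 1 \<le> k \<Longrightarrow> k < l \<Longrightarrow> l \<le> K \<Longrightarrow>
   \<alpha> (item_at R k) \<le> \<alpha> (item_at R l) \<Longrightarrow> chi DX (swap_pos R k l) l \<le> chi DX R l"
  using CA unfolding click_assms_def by blast

definition G :: "nat \<Rightarrow> nat \<Rightarrow> nat \<Rightarrow> nat list \<Rightarrow> real" where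
  "G h a b R = (if adj K h R a b then chi DX R (pos R b) * \<alpha> b - chi DX R (pos R a) * \<alpha> a else 0)"

lemma G_bound:
  assumes "a \<in> {1..K}" "b \<in> {1..K}"
  shows "\<bar>G h a b R\<bar> \<le> 1"
proof -
  have "0 \<le> chi DX R k * \<alpha> c \<and> chi DX R k * \<alpha> c \<le> 1" if "c \<in> {1..K}" for k c
    using apos[OF that] chi_nonneg[of R k] chi_le1[of R k] by (simp add: mult_le_one)
  then show ?thesis using assms unfolding G_def
    by (smt (verit, best))
qed

end


lemma swap_nth_i: "length R = K \<Longrightarrow> Suc (Suc i) \<le> K \<Longrightarrow> m < K \<Longrightarrow>
  swap_pos R (Suc i) (Suc (Suc i)) ! m = (if m = i then R!(Suc i) else if m = Suc i then R!i else R!m)"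
  by (simp add: swap_nth)

lemma pair_idx:
  assumes "h \<le> 1" "k \<in> {1..(K - h) div 2}"
  shows "2*k-1+h = Suc (2*k-2+h)" "2*k+h = Suc (Suc (2*k-2+h))" "Suc (Suc (2*k-2+h)) \<le> K"
proof -
  have "1 \<le> k" "2 * k \<le> K - h" using assms by auto
  then show "2*k-1+h = Suc (2*k-2+h)" "2*k+h = Suc (Suc (2*k-2+h))" "Suc (Suc (2*k-2+h)) \<le> K"
    by linarith+
qed
lemma pair_idx_ne:
  assumes "h \<le> 1" "k \<in> {1..(K - h) div 2}" "k' \<in> {1..(K - h) div 2}" "k \<noteq> k'"
  shows "Suc (2*k'-2+h) < 2*k-2+h \<or> 2*k-2+h + 1 < 2*k'-2+h"
proof -
  have "1 \<le> k" "1 \<le> k'" using assms by auto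
  then show ?thesis using assms(4) by linarith
qed

context br_env
begin

lemma swap_pairs:
  assumes R: "is_list K R" and h: "h \<le> 1" and k: "k \<in> {1..(K - h) div 2}" and k': "k' \<in> {1..(K - h) div 2}"
  shows "{swap_pos R (2*k-1+h) (2*k+h) ! (2*k'-2+h), swap_pos R (2*k-1+h) (2*k+h) ! (2*k'-1+h)}
       = {R!(2*k'-2+h), R!(2*k'-1+h)}"
proof -
  have L: "length R = K" using is_list_length[OF R] .
  define i where "i = 2*k-2+h"
  define j where "j = 2*k'-2+h"
  have ei: "2*k-1+h = Suc i" "2*k+h = Suc (Suc i)" "Suc (Suc i) \<le> K" unfolding i_def by (rule pair_idx[OF h k])+
  have ej: "2*k'-1+h = Suc j" "Suc (Suc j) \<le> K" unfolding j_def by (rule pair_idx[OF h k'])+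
  note sw = swap_nth_i[OF L ei(3)]
  show ?thesis unfolding ei ej j_def[symmetric]
  proof (cases "k' = k")
    case True
    then have "j = i" unfolding i_def j_def by simp
    then show "{swap_pos R (Suc i) (Suc (Suc i)) ! j, swap_pos R (Suc i) (Suc (Suc i)) ! Suc j} = {R ! j, R ! Suc j}"
      using sw[of i] sw[of "Suc i"] ei(3) by auto
  next
    case False
    then have "Suc j < i \<or> i + 1 < j" unfolding i_def j_def by (intro pair_idx_ne[OF h k k']) auto
    then show "{swap_pos R (Suc i) (Suc (Suc i)) ! j, swap_pos R (Suc i) (Suc (Suc i)) ! Suc j} = {R ! j, R ! Suc j}"
      using sw[of j] sw[of "Suc j"] ej(2) by auto
  qed
qed

lemma adj_swap:
  assumes R: "is_list K R" and h: "h \<le> 1" and k: "k \<in> {1..(K - h) div 2}"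
  shows "adj K h (swap_pos R (2*k-1+h) (2*k+h)) a b = adj K h R a b"
  unfolding adj_def using swap_pairs[OF R h k] by simp

lemma other_pos_i:
  assumes R: "is_list K R" and i: "Suc (Suc i) \<le> K" and j: "j < K" "j < i \<or> Suc i < j"
  shows "pos (swap_pos R (Suc i) (Suc (Suc i))) (R!j) = pos R (R!j) \<and>
         chi DX (swap_pos R (Suc i) (Suc (Suc i))) (pos R (R!j)) = chi DX R (pos R (R!j))"
proof -
  let ?R = "swap_pos R (Suc i) (Suc (Suc i))"
  have L: "length R = K" using is_list_length[OF R] .
  have R': "is_list K ?R" using is_list_swap[OF R, of "Suc i" "Suc (Suc i)"] i by simp
  have nj: "?R ! j = R ! j" using swap_nth_i[OF L i j(1)] j(2) by auto
  have p1: "pos ?R (R!j) = Suc j" using pos_nth[OF R' j(1)] nj by simp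
  have p2: "pos R (R!j) = Suc j" using pos_nth[OF R j(1)] .
  have tk: "set (take j ?R) = set (take j R)"
    using take_swap_set[OF L, of "Suc i" j] i j(2) by auto
  have "chi DX ?R (Suc j) = chi DX R (Suc j)"
    by (rule A2[OF R' R]) (use j(1) tk in auto)
  then show ?thesis using p1 p2 by simp
qed

lemma G_swap_other:
  assumes R: "is_list K R" and h: "h \<le> 1" and k: "k \<in> {1..(K - h) div 2}"
    and ab: "a \<in> {1..K}" "b \<in> {1..K}" "a \<noteq> b"
    and np: "{R!(2*k-2+h), R!(2*k-1+h)} \<noteq> {a, b}"
  shows "G h a b (swap_pos R (2*k-1+h) (2*k+h)) = G h a b R"
proof (cases "adj K h R a b")
  case False
  then show ?thesis unfolding G_def adj_swap[OF R h k] by simp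
next
  case True
  define i where "i = 2*k-2+h"
  have ei: "2*k-1+h = Suc i" "2*k+h = Suc (Suc i)" "Suc (Suc i) \<le> K" unfolding i_def by (rule pair_idx[OF h k])+
  obtain k1 where k1: "k1 \<in> {1..(K - h) div 2}" "{R!(2*k1-2+h), R!(2*k1-1+h)} = {a, b}"
    using True unfolding adj_def by blast
  have ne: "k1 \<noteq> k"
  proof
    assume "k1 = k"
    then show False using k1(2) np by simp
  qed
  define j where "j = 2*k1-2+h"
  have ej: "2*k1-1+h = Suc j" "Suc (Suc j) \<le> K" unfolding j_def by (rule pair_idx[OF h k1(1)])+
  have sep: "Suc j < i \<or> i + 1 < j" unfolding i_def j_def by (intro pair_idx_ne[OF h k k1(1)]) (use ne in auto)
  have k1': "{R!j, R!(Suc j)} = {a, b}" using k1(2) unfolding j_def[symmetric] ej .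
  have cond: "R!j' = x \<Longrightarrow> (j' = j \<or> j' = Suc j) \<Longrightarrow> pos (swap_pos R (Suc i) (Suc (Suc i))) x = pos R x \<and>
         chi DX (swap_pos R (Suc i) (Suc (Suc i))) (pos R x) = chi DX R (pos R x)" for j' x
  proof -
    assume a1: "R!j' = x" and a2: "j' = j \<or> j' = Suc j"
    have "j' < K" "j' < i \<or> Suc i < j'" using a2 sep ej(2) by auto
    then show ?thesis using other_pos_i[OF R ei(3)] a1 by blast
  qed
  have "a \<in> {R!j, R!(Suc j)}" "b \<in> {R!j, R!(Suc j)}" using k1' by auto
  then have "a = R!j \<or> a = R!(Suc j)" "b = R!j \<or> b = R!(Suc j)" by auto
  then obtain ja jb where ja: "ja = j \<or> ja = Suc j" "R!ja = a" and jb: "jb = j \<or> jb = Suc j" "R!jb = b" by blast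
  show ?thesis unfolding G_def adj_swap[OF R h k] unfolding ei
    using cond[OF ja(2) ja(1)] cond[OF jb(2) jb(1)] by simp
qed

lemma G_up_i:
  assumes R: "is_list K R" and i: "Suc (Suc i) \<le> K" and up: "R!i = a" "R!(Suc i) = b"
    and ad: "adj K h R a b"
  shows "G h a b R = chi DX R (Suc (Suc i)) * \<alpha> b - chi DX R (Suc i) * \<alpha> a"
proof -
  have pa: "pos R a = Suc i" using pos_nth[OF R, of i] up i by simp
  have pb: "pos R b = Suc (Suc i)" using pos_nth[OF R, of "Suc i"] up i by simp
  show ?thesis unfolding G_def pa pb using ad by simp
qed

lemma G_up_le0_i:
  assumes R: "is_list K R" and i: "Suc (Suc i) \<le> K" and up: "R!i = a" "R!(Suc i) = b"
    and ad: "adj K h R a b" and ab: "1 \<le> a" "a < b" "b \<le> K"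
  shows "G h a b R \<le> 0"
proof -
  have c: "chi DX R (Suc (Suc i)) \<le> chi DX R (Suc i)" by (rule A3[OF R]) (use i in auto)
  have al: "\<alpha> b < \<alpha> a" "0 < \<alpha> b" using amono[OF ab] apos[of b] ab by auto
  have "chi DX R (Suc (Suc i)) * \<alpha> b \<le> chi DX R (Suc i) * \<alpha> b" using c al by (simp add: mult_right_mono)
  also have "\<dots> \<le> chi DX R (Suc i) * \<alpha> a" using al chi_nonneg by (simp add: mult_left_mono)
  finally show ?thesis unfolding G_up_i[OF R i up ad] by simp
qed

lemma G_sum_le0_i:
  assumes R: "is_list K R" and i: "Suc (Suc i) \<le> K" and up: "R!i = a" "R!(Suc i) = b"
    and ad: "adj K h R a b" "adj K h (swap_pos R (Suc i) (Suc (Suc i))) a b"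
    and ab: "1 \<le> a" "a < b" "b \<le> K"
  shows "G h a b R + G h a b (swap_pos R (Suc i) (Suc (Suc i))) \<le> 0"
proof -
  let ?R = "swap_pos R (Suc i) (Suc (Suc i))"
  have L: "length R = K" using is_list_length[OF R] .
  have R': "is_list K ?R" using is_list_swap[OF R, of "Suc i" "Suc (Suc i)"] i by simp
  have n1: "?R ! i = b" using swap_nth_i[OF L i, of i] i up by simp
  have n2: "?R ! (Suc i) = a" using swap_nth_i[OF L i, of "Suc i"] i up by simp
  have pa: "pos ?R a = Suc (Suc i)" using pos_nth[OF R', of "Suc i"] n2 i by simp
  have pb: "pos ?R b = Suc i" using pos_nth[OF R', of i] n1 i by simp
  have G2: "G h a b ?R = chi DX ?R (Suc i) * \<alpha> b - chi DX ?R (Suc (Suc i)) * \<alpha> a"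
    unfolding G_def pa pb using ad(2) by simp
  have tk: "set (take i ?R) = set (take i R)"
    using take_swap_set[OF L, of "Suc i" i] i by simp
  have c1: "chi DX ?R (Suc i) = chi DX R (Suc i)" by (rule A2[OF R' R]) (use i tk in auto)
  have it: "item_at ?R (Suc i) = b" "item_at ?R (Suc (Suc i)) = a" unfolding item_at_def using n1 n2 by auto
  have al: "\<alpha> b < \<alpha> a" "0 < \<alpha> b" "0 < \<alpha> a" using amono[OF ab] apos[of b] apos[of a] ab by auto
  have ss: "swap_pos ?R (Suc i) (Suc (Suc i)) = R" by (rule swap_swap[OF L]) (use i in auto)
  have c2: "chi DX R (Suc (Suc i)) \<le> chi DX ?R (Suc (Suc i))"
    using A4[OF R', of "Suc i" "Suc (Suc i)"] i it al ss by simp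
  have "G h a b R + G h a b ?R = chi DX R (Suc (Suc i)) * \<alpha> b - chi DX R (Suc i) * \<alpha> a + chi DX R (Suc i) * \<alpha> b - chi DX ?R (Suc (Suc i)) * \<alpha> a"
    unfolding G_up_i[OF R i up ad(1)] G2 c1 by simp
  also have "\<dots> \<le> chi DX R (Suc (Suc i)) * \<alpha> b - chi DX R (Suc i) * \<alpha> a + chi DX R (Suc i) * \<alpha> b - chi DX R (Suc (Suc i)) * \<alpha> a"
    using c2 al by (simp add: mult_right_mono)
  also have "\<dots> = (chi DX R (Suc (Suc i)) + chi DX R (Suc i)) * (\<alpha> b - \<alpha> a)" by (simp add: algebra_simps)
  also have "\<dots> \<le> 0" using al chi_nonneg[of R] by (intro mult_nonneg_nonpos) auto
  finally show ?thesis .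
qed

lemma E_rand_pair:
  fixes f :: "nat list \<Rightarrow> real"
  assumes "2*k-1+h = Suc i" "2*k+h = Suc (Suc i)"
  shows "measure_pmf.expectation (rand_pair \<delta> h s n k R) f =
    (if real_of_int (s (R!i) (R!(Suc i))) \<le> conf_rad \<delta> (n (R!i) (R!(Suc i)))
     then (f (swap_pos R (Suc i) (Suc (Suc i))) + f R) / 2 else f R)"
  unfolding rand_pair_def Let_def assms item_at_def by simp

lemma rand_pair_le0:
  assumes R: "is_list K R" and h: "h \<le> 1" and k: "k \<in> {1..(K - h) div 2}"
    and g: "good_stats K \<delta> s n" and ab: "1 \<le> a" "a < b" "b \<le> K"
    and pr: "{R!(2*k-2+h), R!(2*k-1+h)} = {a, b}"
  shows "measure_pmf.expectation (rand_pair \<delta> h s n k R) (G h a b) \<le> 0"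
proof -
  define i where "i = 2*k-2+h"
  have ei: "2*k-1+h = Suc i" "2*k+h = Suc (Suc i)" "Suc (Suc i) \<le> K" unfolding i_def by (rule pair_idx[OF h k])+
  let ?R = "swap_pos R (Suc i) (Suc (Suc i))"
  have L: "length R = K" using is_list_length[OF R] .
  have ad: "adj K h R a b" unfolding adj_def using k pr by blast
  have ad2: "adj K h ?R a b" using adj_swap[OF R h k] ad unfolding ei by simp
  have pr': "{R!i, R!(Suc i)} = {a, b}" using pr unfolding i_def[symmetric] ei .
  have ne: "a \<noteq> b" using ab by simp
  have "(R!i = a \<and> R!(Suc i) = b) \<or> (R!i = b \<and> R!(Suc i) = a)"
    using pr' ne by (auto simp: doubleton_eq_iff)
  then show ?thesis
  proof
    assume up: "R!i = a \<and> R!(Suc i) = b"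
    have 1: "G h a b R \<le> 0" by (rule G_up_le0_i[OF R ei(3) conjunct1[OF up] conjunct2[OF up] ad ab])
    have 2: "G h a b R + G h a b ?R \<le> 0" by (rule G_sum_le0_i[OF R ei(3) conjunct1[OF up] conjunct2[OF up] ad ad2 ab])
    show ?thesis unfolding E_rand_pair[OF ei(1,2)] using 1 2 by simp
  next
    assume dn: "R!i = b \<and> R!(Suc i) = a"
    have R': "is_list K ?R" using is_list_swap[OF R, of "Suc i" "Suc (Suc i)"] ei(3) by simp
    have n1: "?R ! i = a" using swap_nth_i[OF L ei(3), of i] ei(3) dn by simp
    have n2: "?R ! (Suc i) = b" using swap_nth_i[OF L ei(3), of "Suc i"] ei(3) dn by simp
    have ss: "swap_pos ?R (Suc i) (Suc (Suc i)) = R" by (rule swap_swap[OF L]) (use ei in auto)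
    have 2: "G h a b ?R + G h a b R \<le> 0"
      using G_sum_le0_i[OF R' ei(3) n1 n2 ad2 _ ab] ss ad by simp
    have c: "real_of_int (s (R!i) (R!(Suc i))) \<le> conf_rad \<delta> (n (R!i) (R!(Suc i)))"
      using g ab dn unfolding good_stats_def by auto
    show ?thesis unfolding E_rand_pair[OF ei(1,2)] using 2 c by simp
  qed
qed

lemma rand_pair_other:
  assumes R: "is_list K R" and h: "h \<le> 1" and k: "k \<in> {1..(K - h) div 2}"
    and ab: "a \<in> {1..K}" "b \<in> {1..K}" "a \<noteq> b"
    and np: "{R!(2*k-2+h), R!(2*k-1+h)} \<noteq> {a, b}"
  shows "measure_pmf.expectation (rand_pair \<delta> h s n k R) (G h a b) = G h a b R"
proof -
  define i where "i = 2*k-2+h"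
  have ei: "2*k-1+h = Suc i" "2*k+h = Suc (Suc i)" "Suc (Suc i) \<le> K" unfolding i_def by (rule pair_idx[OF h k])+
  have "G h a b (swap_pos R (Suc i) (Suc (Suc i))) = G h a b R"
    using G_swap_other[OF R h k ab np] unfolding ei .
  then show ?thesis unfolding E_rand_pair[OF ei(1,2)] by simp
qed

lemma fold_claim:
  assumes h: "h \<le> 1" and g: "good_stats K \<delta> s n" and ab: "1 \<le> a" "a < b" "b \<le> K"
  shows "distinct ks \<Longrightarrow> set ks \<subseteq> {1..(K - h) div 2} \<Longrightarrow> is_list K R \<Longrightarrow>
    measure_pmf.expectation (fold (\<lambda>k M. bind_pmf M (rand_pair \<delta> h s n k)) ks (return_pmf R)) (G h a b)
    \<le> (if \<exists>k\<in>set ks. {R!(2*k-2+h), R!(2*k-1+h)} = {a, b} then 0 else G h a b R)"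
proof (induction ks arbitrary: R)
  case Nil then show ?case by simp
next
  case (Cons k ks)
  have ab': "a \<in> {1..K}" "b \<in> {1..K}" "a \<noteq> b" using ab by auto
  have k: "k \<in> {1..(K - h) div 2}" using Cons.prems by auto
  have ks: "distinct ks" "set ks \<subseteq> {1..(K - h) div 2}" using Cons.prems by auto
  have kn: "k \<notin> set ks" using Cons.prems by auto
  define F where "F = (\<lambda>x. fold (\<lambda>k M. bind_pmf M (rand_pair \<delta> h s n k)) ks (return_pmf x))"
  define I where "I = (\<lambda>x. measure_pmf.expectation (F x) (G h a b))"
  define i where "i = 2*k-2+h"
  have ei: "2*k-1+h = Suc i" "2*k+h = Suc (Suc i)" "Suc (Suc i) \<le> K" unfolding i_def by (rule pair_idx[OF h k])+
  let ?R = "swap_pos R (Suc i) (Suc (Suc i))"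
  have R: "is_list K R" using Cons.prems by simp
  have R': "is_list K ?R" using is_list_swap[OF R, of "Suc i" "Suc (Suc i)"] ei(3) by simp
  have e1: "measure_pmf.expectation (fold (\<lambda>k M. bind_pmf M (rand_pair \<delta> h s n k)) (k # ks) (return_pmf R)) (G h a b)
      = measure_pmf.expectation (rand_pair \<delta> h s n k R) I"
    unfolding fold_bind_Cons I_def F_def
    by (rule integral_bind_pmf_bdd[where B=1]) (rule G_bound[OF ab'(1,2)])
  define cond where "cond = (real_of_int (s (R!i) (R!(Suc i))) \<le> conf_rad \<delta> (n (R!i) (R!(Suc i))))"
  have e2: "measure_pmf.expectation (rand_pair \<delta> h s n k R) f = (if cond then (f ?R + f R) / 2 else f R)"
    for f :: "nat list \<Rightarrow> real"
    unfolding cond_def by (rule E_rand_pair[OF ei(1,2)])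
  have sp: "{?R ! (2*k'-2+h), ?R ! (2*k'-1+h)} = {R!(2*k'-2+h), R!(2*k'-1+h)}" if "k' \<in> set ks" for k'
  proof -
    have kk: "k' \<in> {1..(K - h) div 2}" using that ks(2) by blast
    show ?thesis using swap_pairs[OF R h k kk] unfolding ei .
  qed
  define Ex where "Ex = (\<exists>k'\<in>set ks. {R!(2*k'-2+h), R!(2*k'-1+h)} = {a, b})"
  have ExR: "(\<exists>k'\<in>set ks. {?R ! (2*k'-2+h), ?R ! (2*k'-1+h)} = {a, b}) = Ex"
    unfolding Ex_def using sp by auto
  have IR: "I R \<le> (if Ex then 0 else G h a b R)"
    unfolding I_def F_def Ex_def by (rule Cons.IH[OF ks R])
  have IR': "I ?R \<le> (if Ex then 0 else G h a b ?R)"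
    unfolding I_def F_def ExR[symmetric] by (rule Cons.IH[OF ks R'])
  show ?case
  proof (cases Ex)
    case True
    then have "I R \<le> 0" "I ?R \<le> 0" using IR IR' by auto
    then have "measure_pmf.expectation (rand_pair \<delta> h s n k R) I \<le> 0" unfolding e2 by simp
    then show ?thesis unfolding e1 using True unfolding Ex_def by auto
  next
    case False
    then have "I R \<le> G h a b R" "I ?R \<le> G h a b ?R" using IR IR' by auto
    then have le: "measure_pmf.expectation (rand_pair \<delta> h s n k R) I \<le> measure_pmf.expectation (rand_pair \<delta> h s n k R) (G h a b)"
      unfolding e2 by simp
    show ?thesis
    proof (cases "{R!(2*k-2+h), R!(2*k-1+h)} = {a, b}")
      case True
      have "measure_pmf.expectation (rand_pair \<delta> h s n k R) (G h a b) \<le> 0"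
        by (rule rand_pair_le0[OF R h k g ab True])
      then show ?thesis unfolding e1 using le True by auto
    next
      case F2: False
      have "measure_pmf.expectation (rand_pair \<delta> h s n k R) (G h a b) = G h a b R"
        by (rule rand_pair_other[OF R h k ab' F2])
      moreover have "\<not> (\<exists>k\<in>set (k # ks). {R!(2*k-2+h), R!(2*k-1+h)} = {a, b})"
        using False F2 unfolding Ex_def by auto
      ultimately show ?thesis unfolding e1 using le by auto
    qed
  qed
qed

lemma randomize_G:
  assumes h: "h \<le> 1" and g: "good_stats K \<delta> s n" and ab: "1 \<le> a" "a < b" "b \<le> K"
    and R: "is_list K Rb"
  shows "measure_pmf.expectation (randomize \<delta> K h s n Rb) (G h a b) \<le> 0"
proof -
  have st: "set [1..<(K - h) div 2 + 1] = {1..(K - h) div 2}" by auto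
  have "measure_pmf.expectation (randomize \<delta> K h s n Rb) (G h a b) \<le>
     (if \<exists>k\<in>set [1..<(K - h) div 2 + 1]. {Rb!(2*k-2+h), Rb!(2*k-1+h)} = {a, b} then 0 else G h a b Rb)"
    unfolding randomize_def by (rule fold_claim[OF h g ab]) (use R in auto)
  also have "\<dots> \<le> 0" unfolding st G_def adj_def by auto
  finally show ?thesis .
qed

end


lemma cosh_bound:
  fixes l :: real assumes l: "0 \<le> l"
  shows "exp (l - l^2) + exp (- l - l^2) \<le> 2"
proof -
  have key: "exp l + exp (- l) \<le> 2 * exp (l^2)"
  proof (cases "l \<ge> 1")
    case True
    have x1: "exp l \<le> exp (l^2)" using True by (simp add: power2_eq_square)
    have "- l \<le> l^2" using l zero_le_power2[of l] by linarith
    then have x2: "exp (- l) \<le> exp (l^2)" by simp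
    show ?thesis using x1 x2 by linarith
  next
    case False
    have e1: "exp l \<le> 1 + l + l^2" using exp_bound[OF l] False by simp
    have p: "0 < exp l" "1 + l \<le> exp l" using exp_ge_add_one_self[of l] by auto
    have "exp (- l) = 1 / exp l" by (simp add: exp_minus field_simps)
    also have "\<dots> \<le> 1 / (1 + l)" using p l by (intro divide_left_mono) auto
    also have "\<dots> \<le> 1 - l + l^2"
    proof -
      have "1 \<le> (1 - l + l^2) * (1 + l)" using l by (simp add: algebra_simps power2_eq_square power3_eq_cube)
      then show ?thesis using l by (simp add: field_simps)
    qed
    finally have e2: "exp (- l) \<le> 1 - l + l^2" .
    have "2 + 2 * l^2 \<le> 2 * exp (l^2)" using exp_ge_add_one_self[of "l^2"] by linarith
    then show ?thesis using e1 e2 by simp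
  qed
  have "exp (l - l^2) + exp (- l - l^2) = (exp l + exp (- l)) / exp (l^2)"
    by (simp add: exp_diff add_divide_distrib)
  also have "\<dots> \<le> 2" using key by (simp add: divide_le_eq)
  finally show ?thesis .
qed

context br_env
begin

lemma prob_click:
  assumes a: "a \<in> {1..K}"
  shows "measure_pmf.prob (env \<alpha> K DX) {\<omega>. snd \<omega> R k \<and> fst \<omega> a} = chi DX R k * \<alpha> a"
proof -
  let ?f = "\<lambda>(A::nat \<Rightarrow> bool, X::nat list \<Rightarrow> nat \<Rightarrow> bool). (A a, X R k)"
  have s: "{\<omega>. snd \<omega> R k \<and> fst \<omega> a} = ?f -` ({True} \<times> {True})" by auto
  have m: "map_pmf ?f (env \<alpha> K DX) = pair_pmf (map_pmf (\<lambda>A. A a) (Pi_pmf {1..K} False (\<lambda>i. bernoulli_pmf (\<alpha> i)))) (map_pmf (\<lambda>X. X R k) DX)"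
    unfolding env_def by (rule map_pair)
  have b: "map_pmf (\<lambda>A. A a) (Pi_pmf {1..K} False (\<lambda>i. bernoulli_pmf (\<alpha> i))) = bernoulli_pmf (\<alpha> a)"
    using Pi_pmf_component[of "{1..K}" a False "\<lambda>i. bernoulli_pmf (\<alpha> i)"] a by simp
  have al: "0 \<le> \<alpha> a" "\<alpha> a \<le> 1" using apos[OF a] by auto
  have "measure_pmf.prob (env \<alpha> K DX) {\<omega>. snd \<omega> R k \<and> fst \<omega> a}
      = measure_pmf.prob (map_pmf ?f (env \<alpha> K DX)) ({True} \<times> {True})"
    unfolding s measure_map_pmf ..
  also have "\<dots> = measure_pmf.prob (bernoulli_pmf (\<alpha> a)) {True} * measure_pmf.prob (map_pmf (\<lambda>X. X R k) DX) {True}"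
    unfolding m b by (rule measure_pmf_prob_product) auto
  also have "measure_pmf.prob (map_pmf (\<lambda>X. X R k) DX) {True} = chi DX R k"
    unfolding measure_map_pmf chi_def by (simp add: vimage_def)
  finally show ?thesis using al by (simp add: measure_pmf_single pmf_bernoulli_True)
qed

lemma env_bound:
  fixes e1 e2 :: real
  assumes a: "a \<in> {1..K}" and b: "b \<in> {1..K}"
    and e: "0 \<le> e1" "0 \<le> e2" "e2 \<le> 1" "e1 + e2 \<le> 2"
  shows "measure_pmf.expectation (env \<alpha> K DX)
     (\<lambda>\<omega>. if (snd \<omega> R k1 \<and> fst \<omega> b) \<and> \<not> (snd \<omega> R k2 \<and> fst \<omega> a) then e1
          else if (snd \<omega> R k2 \<and> fst \<omega> a) \<and> \<not> (snd \<omega> R k1 \<and> fst \<omega> b) then e2 else 1)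
     \<le> 1 + (1 - e2) * (chi DX R k1 * \<alpha> b - chi DX R k2 * \<alpha> a)"
proof -
  let ?M = "env \<alpha> K DX"
  define U where "U = {\<omega>::(nat \<Rightarrow> bool) \<times> (nat list \<Rightarrow> nat \<Rightarrow> bool). snd \<omega> R k1 \<and> fst \<omega> b}"
  define V where "V = {\<omega>::(nat \<Rightarrow> bool) \<times> (nat list \<Rightarrow> nat \<Rightarrow> bool). snd \<omega> R k2 \<and> fst \<omega> a}"
  have pt: "(if (snd \<omega> R k1 \<and> fst \<omega> b) \<and> \<not> (snd \<omega> R k2 \<and> fst \<omega> a) then e1
          else if (snd \<omega> R k2 \<and> fst \<omega> a) \<and> \<not> (snd \<omega> R k1 \<and> fst \<omega> b) then e2 else 1)
     = 1 + (e1 + e2 - 2) * indicator (U - V) \<omega> + (1 - e2) * (indicator U \<omega> - indicator V \<omega>)" for \<omega>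
  proof -
    define P where "P = (snd \<omega> R k1 \<and> fst \<omega> b)"
    define Q where "Q = (snd \<omega> R k2 \<and> fst \<omega> a)"
    have iU: "indicator U \<omega> = (if P then 1 else (0::real))" unfolding U_def P_def by simp
    have iV: "indicator V \<omega> = (if Q then 1 else (0::real))" unfolding V_def Q_def by simp
    have iUV: "indicator (U - V) \<omega> = (if P \<and> \<not> Q then 1 else (0::real))" unfolding U_def V_def P_def Q_def by simp
    show ?thesis unfolding P_def[symmetric] Q_def[symmetric] iU iV iUV
      by (cases P; cases Q) simp_all
  qed
  have int: "integrable ?M (indicator S :: _ \<Rightarrow> real)" for S
    by (rule measure_pmf.integrable_const_bound[where B=1]) auto
  have "measure_pmf.expectation ?M (\<lambda>\<omega>. 1 + (e1 + e2 - 2) * indicator (U - V) \<omega> + (1 - e2) * (indicator U \<omega> - indicator V \<omega>))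
     = 1 + (e1 + e2 - 2) * measure_pmf.prob ?M (U - V) + (1 - e2) * (measure_pmf.prob ?M U - measure_pmf.prob ?M V)"
    using int by (simp add: integral_indicator)
  also have "\<dots> \<le> 1 + (1 - e2) * (measure_pmf.prob ?M U - measure_pmf.prob ?M V)"
    using e by (simp add: mult_nonpos_nonneg)
  also have "measure_pmf.prob ?M U = chi DX R k1 * \<alpha> b" unfolding U_def by (rule prob_click[OF b])
  also have "measure_pmf.prob ?M V = chi DX R k2 * \<alpha> a" unfolding V_def by (rule prob_click[OF a])
  finally show ?thesis unfolding pt .
qed

end


definition clicks :: "nat list \<Rightarrow> ((nat \<Rightarrow> bool) \<times> (nat list \<Rightarrow> nat \<Rightarrow> bool)) \<Rightarrow> nat \<Rightarrow> bool" where
  "clicks R \<omega> = (\<lambda>k. snd \<omega> R k \<and> fst \<omega> (item_at R k))"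

definition stp :: "real \<Rightarrow> nat \<Rightarrow> nat \<Rightarrow> stats \<Rightarrow> counts \<Rightarrow> nat list \<Rightarrow> nat list \<Rightarrow>
    ((nat \<Rightarrow> bool) \<times> (nat list \<Rightarrow> nat \<Rightarrow> bool)) \<Rightarrow> br_state" where
  "stp \<delta> K h s n Rb R \<omega> = (let sn' = fold (upd_pair h R (clicks R \<omega>)) [1..<(K - h) div 2 + 1] (s, n) in
     (fst sn', snd sn', fold (bubble_step \<delta> (fst sn') (snd sn')) [1..<K] Rb))"

lemma br_step_eq:
  "br_step \<alpha> DX \<delta> K t (s, n, Rb) = bind_pmf (randomize \<delta> K (t mod 2) s n Rb)
     (\<lambda>R. map_pmf (\<lambda>\<omega>. (R, stp \<delta> K (t mod 2) s n Rb R \<omega>)) (env \<alpha> K DX))"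
  unfolding br_step_def map_pmf_def stp_def clicks_def Let_def split_beta by simp

lemma exp_split:
  fixes l :: real
  shows "exp (l * real_of_int (x + (if A then of_bool u - of_bool v else 0)) - l^2 * real (y + (if A \<and> u \<noteq> v then 1 else 0)))
   = exp (l * real_of_int x - l^2 * real y) * (if A then (if u \<and> \<not> v then exp (l - l^2) else if v \<and> \<not> u then exp (- l - l^2) else 1) else 1)"
  by (cases A; cases u; cases v) (simp_all add: exp_add[symmetric] algebra_simps)

lemma nn_br_step:
  "(\<integral>\<^sup>+x. f x \<partial>br_step \<alpha> DX \<delta> K t (s, n, Rb)) =
   (\<integral>\<^sup>+R. \<integral>\<^sup>+\<omega>. f (R, stp \<delta> K (t mod 2) s n Rb R \<omega>) \<partial>env \<alpha> K DX \<partial>randomize \<delta> K (t mod 2) s n Rb)"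
  unfolding br_step_eq by (simp add: nn_integral_map_pmf)

lemma set_br_step:
  "(R, st') \<in> set_pmf (br_step \<alpha> DX \<delta> K t (s, n, Rb)) \<Longrightarrow>
   R \<in> set_pmf (randomize \<delta> K (t mod 2) s n Rb) \<and> (\<exists>\<omega>. st' = stp \<delta> K (t mod 2) s n Rb R \<omega>)"
  unfolding br_step_eq by auto

context br_env
begin

lemma term_step:
  assumes Rb: "is_list K Rb" and g: "good_stats K \<delta> s n" and h: "h \<le> 1"
    and ab: "1 \<le> a" "a < b" "b \<le> K" and l: "0 \<le> l"
  shows "(\<integral>\<^sup>+R. \<integral>\<^sup>+\<omega>. ennreal (exp (l * real_of_int (fst (stp \<delta> K h s n Rb R \<omega>) b a)
            - l^2 * real (fst (snd (stp \<delta> K h s n Rb R \<omega>)) b a))) \<partial>env \<alpha> K DX \<partial>randomize \<delta> K h s n Rb)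
     \<le> ennreal (exp (l * real_of_int (s b a) - l^2 * real (n b a)))"
proof -
  define T0 where "T0 = exp (l * real_of_int (s b a) - l^2 * real (n b a))"
  define e1 where "e1 = exp (l - l^2)"
  define e2 where "e2 = exp (- l - l^2)"
  have ab': "a \<in> {1..K}" "b \<in> {1..K}" "a \<noteq> b" using ab by auto
  have le0: "- l - l^2 \<le> 0" using l zero_le_power2[of l] by linarith
  have e: "0 \<le> e1" "0 \<le> e2" "e2 \<le> 1" "e1 + e2 \<le> 2"
    unfolding e1_def e2_def using cosh_bound[OF l] le0 by auto
  have T0: "0 \<le> T0" unfolding T0_def by simp
  define psi where "psi = (\<lambda>R \<omega>. if adj K h R a b then
       (if (snd \<omega> R (pos R b) \<and> fst \<omega> b) \<and> \<not> (snd \<omega> R (pos R a) \<and> fst \<omega> a) then e1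
        else if (snd \<omega> R (pos R a) \<and> fst \<omega> a) \<and> \<not> (snd \<omega> R (pos R b) \<and> fst \<omega> b) then e2 else 1) else (1::real))"
  have psi_b: "0 \<le> psi R \<omega> \<and> psi R \<omega> \<le> e1 + e2 + 1" for R \<omega> unfolding psi_def using e by auto
  have pw: "exp (l * real_of_int (fst (stp \<delta> K h s n Rb R \<omega>) b a) - l^2 * real (fst (snd (stp \<delta> K h s n Rb R \<omega>)) b a))
       = T0 * psi R \<omega>" if R: "is_list K R" for R \<omega>
  proof -
    obtain s' n' where f: "fold (upd_pair h R (clicks R \<omega>)) [1..<(K - h) div 2 + 1] (s, n) = (s', n')" by fastforce
    have st: "fst (stp \<delta> K h s n Rb R \<omega>) = s'" "fst (snd (stp \<delta> K h s n Rb R \<omega>)) = n'"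
      unfolding stp_def Let_def f by simp_all
    have cb: "clicks R \<omega> (pos R b) = (snd \<omega> R (pos R b) \<and> fst \<omega> b)"
      unfolding clicks_def item_at_def using pos_props[OF R ab'(2)] by simp
    have ca: "clicks R \<omega> (pos R a) = (snd \<omega> R (pos R a) \<and> fst \<omega> a)"
      unfolding clicks_def item_at_def using pos_props[OF R ab'(1)] by simp
    show ?thesis unfolding st upd_pair_adj[OF R h ab' f] exp_split T0_def psi_def e1_def e2_def cb ca ..
  qed
  have inner: "(\<integral>\<^sup>+\<omega>. ennreal (exp (l * real_of_int (fst (stp \<delta> K h s n Rb R \<omega>) b a)
            - l^2 * real (fst (snd (stp \<delta> K h s n Rb R \<omega>)) b a))) \<partial>env \<alpha> K DX)
       \<le> ennreal (T0 * (1 + (1 - e2) * G h a b R))" if R: "is_list K R" for R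
  proof -
    have int: "integrable (env \<alpha> K DX) (\<lambda>\<omega>. T0 * psi R \<omega>)"
      by (rule measure_pmf.integrable_const_bound[where B="T0 * (e1 + e2 + 1)"])
         (use psi_b T0 in \<open>auto intro!: AE_I2 mult_left_mono\<close>)
    have "(\<integral>\<^sup>+\<omega>. ennreal (exp (l * real_of_int (fst (stp \<delta> K h s n Rb R \<omega>) b a)
            - l^2 * real (fst (snd (stp \<delta> K h s n Rb R \<omega>)) b a))) \<partial>env \<alpha> K DX)
        = (\<integral>\<^sup>+\<omega>. ennreal (T0 * psi R \<omega>) \<partial>env \<alpha> K DX)"
      using pw[OF R] by simp
    also have "\<dots> = ennreal (measure_pmf.expectation (env \<alpha> K DX) (\<lambda>\<omega>. T0 * psi R \<omega>))"
      by (rule nn_integral_eq_integral[OF int]) (use psi_b T0 in auto)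
    also have "measure_pmf.expectation (env \<alpha> K DX) (\<lambda>\<omega>. T0 * psi R \<omega>) = T0 * measure_pmf.expectation (env \<alpha> K DX) (psi R)"
      by simp
    also have "measure_pmf.expectation (env \<alpha> K DX) (psi R) \<le> 1 + (1 - e2) * G h a b R"
    proof (cases "adj K h R a b")
      case True
      have "measure_pmf.expectation (env \<alpha> K DX) (psi R) \<le> 1 + (1 - e2) * (chi DX R (pos R b) * \<alpha> b - chi DX R (pos R a) * \<alpha> a)"
        unfolding psi_def using True env_bound[OF ab'(1,2) e, of R "pos R b" "pos R a"] by simp
      then show ?thesis unfolding G_def using True by simp
    next
      case False
      then show ?thesis unfolding psi_def G_def by simp
    qed
    then have "ennreal (T0 * measure_pmf.expectation (env \<alpha> K DX) (psi R)) \<le> ennreal (T0 * (1 + (1 - e2) * G h a b R))"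
      using T0 by (intro ennreal_leI mult_left_mono) auto
    finally show ?thesis .
  qed
  have Gb: "\<bar>G h a b R\<bar> \<le> 1" for R by (rule G_bound[OF ab'(1,2)])
  have ab1: "\<bar>(1 - e2) * G h a b R\<bar> \<le> 1" for R
  proof -
    have "\<bar>(1 - e2) * G h a b R\<bar> \<le> 1 * 1" unfolding abs_mult using e Gb[of R]
      by (intro mult_mono) auto
    then show ?thesis by simp
  qed
  have nn: "0 \<le> 1 + (1 - e2) * G h a b R" for R using ab1[of R] by (auto simp: abs_le_iff)
  have ab2: "\<bar>T0 * (1 + (1 - e2) * G h a b R)\<bar> \<le> T0 * 2" for R
  proof -
    have "\<bar>1 + (1 - e2) * G h a b R\<bar> \<le> 2" using ab1[of R] by (auto simp: abs_le_iff)
    then show ?thesis using T0 by (simp add: abs_mult mult_left_mono)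
  qed
  have "(\<integral>\<^sup>+R. \<integral>\<^sup>+\<omega>. ennreal (exp (l * real_of_int (fst (stp \<delta> K h s n Rb R \<omega>) b a)
            - l^2 * real (fst (snd (stp \<delta> K h s n Rb R \<omega>)) b a))) \<partial>env \<alpha> K DX \<partial>randomize \<delta> K h s n Rb)
     \<le> (\<integral>\<^sup>+R. ennreal (T0 * (1 + (1 - e2) * G h a b R)) \<partial>randomize \<delta> K h s n Rb)"
    by (rule nn_integral_mono_AE) (use inner randomize_ok(1)[OF Rb h] in \<open>auto simp: AE_measure_pmf_iff\<close>)
  also have "\<dots> = ennreal (measure_pmf.expectation (randomize \<delta> K h s n Rb) (\<lambda>R. T0 * (1 + (1 - e2) * G h a b R)))"
  proof (rule nn_integral_eq_integral)
    show "integrable (randomize \<delta> K h s n Rb) (\<lambda>R. T0 * (1 + (1 - e2) * G h a b R))"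
      by (rule measure_pmf.integrable_const_bound[where B="T0 * 2"])
         (use ab2 in auto)
    show "AE x in randomize \<delta> K h s n Rb. 0 \<le> T0 * (1 + (1 - e2) * G h a b x)"
      using T0 nn by simp
  qed
  also have "measure_pmf.expectation (randomize \<delta> K h s n Rb) (\<lambda>R. T0 * (1 + (1 - e2) * G h a b R))
      = T0 * (1 + (1 - e2) * measure_pmf.expectation (randomize \<delta> K h s n Rb) (G h a b))"
  proof -
    have int: "integrable (randomize \<delta> K h s n Rb) (G h a b)"
      by (rule measure_pmf.integrable_const_bound[where B=1]) (use Gb in auto)
    show ?thesis using int by (simp add: integral_add integral_mult_right)
  qed
  also have "\<dots> \<le> T0"
  proof -
    have "measure_pmf.expectation (randomize \<delta> K h s n Rb) (G h a b) \<le> 0"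
      by (rule randomize_G[OF h g ab Rb])
    then have "(1 - e2) * measure_pmf.expectation (randomize \<delta> K h s n Rb) (G h a b) \<le> 0"
      using e by (simp add: mult_nonneg_nonpos)
    then show ?thesis using T0 by (simp add: mult_left_le)
  qed
  finally show ?thesis unfolding T0_def by (simp add: ennreal_leI)
qed

end


context br_env
begin

definition Lg :: real where "Lg = ln (1 / \<delta>)"
definition lam :: "nat \<Rightarrow> real" where "lam m = sqrt (Lg / real m)"
definition pairs :: "(nat \<times> nat) set" where "pairs = {(a, b). 1 \<le> a \<and> a < b \<and> b \<le> K}"
definition trm :: "nat \<Rightarrow> nat \<times> nat \<Rightarrow> stats \<Rightarrow> counts \<Rightarrow> real" where
  "trm m p s n = exp (lam m * real_of_int (s (snd p) (fst p)) - (lam m)^2 * real (n (snd p) (fst p)))"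
definition Phi :: "nat \<Rightarrow> stats \<Rightarrow> counts \<Rightarrow> real" where
  "Phi N s n = \<delta> * (\<Sum>p\<in>pairs. \<Sum>m\<in>{1..N}. trm m p s n)"

lemma Lg_pos: "0 < Lg" unfolding Lg_def using \<delta>0 \<delta>1 by simp

lemma finite_pairs: "finite pairs"
  by (rule finite_subset[of _ "{1..K} \<times> {1..K}"]) (auto simp: pairs_def)

lemma card_pairs: "card pairs \<le> K * K"
proof -
  have "card pairs \<le> card ({1..K} \<times> {1..K})"
    by (rule card_mono) (auto simp: pairs_def)
  then show ?thesis by (simp add: card_cartesian_product)
qed

lemma Phi_nonneg: "0 \<le> Phi N s n"
  unfolding Phi_def trm_def using \<delta>0 by (intro mult_nonneg_nonneg sum_nonneg) auto

lemma Phi_step: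
  assumes Rb: "is_list K Rb" and g: "good_stats K \<delta> s n"
  shows "(\<integral>\<^sup>+x. ennreal (Phi N (fst (snd x)) (fst (snd (snd x)))) \<partial>br_step \<alpha> DX \<delta> K t (s, n, Rb))
     \<le> ennreal (Phi N s n)"
proof -
  let ?M = "br_step \<alpha> DX \<delta> K t (s, n, Rb)"
  have h: "t mod 2 \<le> 1" by simp
  have e: "ennreal (Phi N s' n') = ennreal \<delta> * (\<Sum>p\<in>pairs. \<Sum>m\<in>{1..N}. ennreal (trm m p s' n'))" for s' n'
    unfolding Phi_def using \<delta>0 by (simp add: ennreal_mult trm_def sum_nonneg)
  have "(\<integral>\<^sup>+x. ennreal (Phi N (fst (snd x)) (fst (snd (snd x)))) \<partial>?M)
      = ennreal \<delta> * (\<Sum>p\<in>pairs. \<Sum>m\<in>{1..N}. \<integral>\<^sup>+x. ennreal (trm m p (fst (snd x)) (fst (snd (snd x)))) \<partial>?M)"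
    unfolding e by (simp add: nn_integral_cmult nn_integral_sum)
  also have "\<dots> \<le> ennreal \<delta> * (\<Sum>p\<in>pairs. \<Sum>m\<in>{1..N}. ennreal (trm m p s n))"
  proof (intro mult_left_mono sum_mono)
    fix p m assume p: "p \<in> pairs" and m: "m \<in> {1..N}"
    obtain a b where ab: "p = (a, b)" "1 \<le> a" "a < b" "b \<le> K" using p unfolding pairs_def by auto
    have l: "0 \<le> lam m" unfolding lam_def using Lg_pos by simp
    show "(\<integral>\<^sup>+x. ennreal (trm m p (fst (snd x)) (fst (snd (snd x)))) \<partial>?M) \<le> ennreal (trm m p s n)"
      unfolding nn_br_step trm_def ab(1) fst_conv snd_conv
      by (rule term_step[OF Rb g h ab(2-4) l])
  qed simp
  also have "\<dots> = ennreal (Phi N s n)" unfolding e ..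
  finally show ?thesis .
qed

lemma sqrt_prod: assumes "0 < m" "0 \<le> L" shows "sqrt (L / m) * sqrt (m * L) = L"
proof -
  have 1: "sqrt (L / m) * sqrt (m * L) = sqrt (L / m * (m * L))" by (rule real_sqrt_mult[symmetric])
  have 2: "L / m * (m * L) = L^2" using assms by (simp add: power2_eq_square field_simps)
  have 3: "sqrt (L^2) = L" using assms by simp
  show ?thesis by (simp only: 1 2 3)
qed

lemma Phi_big:
  assumes bd: "\<forall>p\<in>pairs. \<bar>s (snd p) (fst p)\<bar> \<le> int (n (snd p) (fst p)) \<and> n (snd p) (fst p) \<le> N"
    and ng: "\<not> good_stats K \<delta> s n"
  shows "1 \<le> Phi N s n"
proof -
  obtain a b where ab: "1 \<le> a" "a < b" "b \<le> K" and gt: "real_of_int (s b a) > conf_rad \<delta> (n b a)"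
    using ng unfolding good_stats_def by force
  have p: "(a, b) \<in> pairs" unfolding pairs_def using ab by auto
  define m where "m = n b a"
  have bd': "\<bar>s b a\<bar> \<le> int m" "m \<le> N" using bd p unfolding m_def by auto
  have m1: "1 \<le> m"
  proof (rule ccontr)
    assume "\<not> 1 \<le> m"
    then have "m = 0" by simp
    then have "s b a = 0" using bd' by simp
    then show False using gt \<open>m = 0\<close> unfolding m_def conf_rad_def by simp
  qed
  have lp: "0 < lam m" unfolding lam_def using Lg_pos m1 by simp
  have "lam m * (2 * sqrt (real m * Lg)) < lam m * real_of_int (s b a)"
    using gt lp unfolding conf_rad_def m_def Lg_def by simp
  moreover have "lam m * (2 * sqrt (real m * Lg)) = 2 * Lg"
    unfolding lam_def using sqrt_prod[of "real m" Lg] m1 Lg_pos by simp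
  moreover have "(lam m)^2 * real m = Lg" unfolding lam_def using Lg_pos m1 by simp
  ultimately have "Lg < lam m * real_of_int (s b a) - (lam m)^2 * real (n b a)" unfolding m_def by simp
  then have "exp Lg < trm m (a, b) s n" unfolding trm_def by simp
  moreover have "exp Lg = 1 / \<delta>" unfolding Lg_def using \<delta>0 by simp
  ultimately have t1: "1 < \<delta> * trm m (a, b) s n" using \<delta>0 by (simp add: field_simps)
  have "trm m (a, b) s n \<le> (\<Sum>m'\<in>{1..N}. trm m' (a, b) s n)"
    by (rule member_le_sum) (use m1 bd' in \<open>auto simp: trm_def\<close>)
  also have "\<dots> \<le> (\<Sum>p\<in>pairs. \<Sum>m\<in>{1..N}. trm m p s n)"
    by (rule member_le_sum[OF p]) (auto simp: trm_def intro: sum_nonneg finite_pairs)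
  finally have "\<delta> * trm m (a, b) s n \<le> Phi N s n" unfolding Phi_def using \<delta>0 by simp
  then show ?thesis using t1 by simp
qed

lemma Phi0: "Phi N (\<lambda>_ _. 0) (\<lambda>_ _. 0) \<le> \<delta> * real K ^ 2 * real N"
proof -
  have "Phi N (\<lambda>_ _. 0) (\<lambda>_ _. 0) = \<delta> * (real (card pairs) * real N)"
    unfolding Phi_def trm_def by simp
  also have "\<dots> \<le> \<delta> * (real (K * K) * real N)"
  proof -
    have "real (card pairs) \<le> real (K * K)" using card_pairs by (simp only: of_nat_le_iff)
    then show ?thesis using \<delta>0 by (intro mult_left_mono mult_right_mono) auto
  qed
  finally show ?thesis by (simp add: power2_eq_square)
qed

end


context br_env
begin

definition OKs :: "nat list \<Rightarrow> nat list list \<Rightarrow> stats \<Rightarrow> counts \<Rightarrow> nat list \<Rightarrow> bool" where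
  "OKs R0 Rs s n Rb \<longleftrightarrow> is_list K Rb \<and> card (inv_pairs K Rb) \<le> card (inv_pairs K R0) \<and>
     (\<forall>R\<in>set Rs. real (card (inv_pairs K R)) \<le> real (card (inv_pairs K R0)) + real K / 2) \<and>
     good_stats K \<delta> s n \<and>
     (\<forall>p\<in>pairs. \<bar>s (snd p) (fst p)\<bar> \<le> int (n (snd p) (fst p)) \<and> n (snd p) (fst p) \<le> length Rs)"

definition Bf :: "nat \<Rightarrow> nat list \<Rightarrow> nat list list \<times> br_state \<Rightarrow> real" where
  "Bf N R0 x = (case x of (Rs, s, n, Rb) \<Rightarrow> if OKs R0 Rs s n Rb then min 1 (Phi N s n) else 1)"

lemma Bf_le1: "Bf N R0 x \<le> 1" unfolding Bf_def by (auto split: prod.splits)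

lemma step_det:
  assumes ok: "OKs R0 Rs s n Rb" and mem: "(R, s', n', Rb') \<in> set_pmf (br_step \<alpha> DX \<delta> K t (s, n, Rb))"
  shows "real (card (inv_pairs K R)) \<le> real (card (inv_pairs K R0)) + real K / 2"
    and "\<forall>p\<in>pairs. \<bar>s' (snd p) (fst p)\<bar> \<le> int (n' (snd p) (fst p)) \<and> n' (snd p) (fst p) \<le> length Rs + 1"
    and "good_stats K \<delta> s' n' \<Longrightarrow> is_list K Rb' \<and> card (inv_pairs K Rb') \<le> card (inv_pairs K R0)"
proof -
  define h where "h = t mod 2"
  have h: "h \<le> 1" unfolding h_def by simp
  have Rb: "is_list K Rb" and cRb: "card (inv_pairs K Rb) \<le> card (inv_pairs K R0)"
    and g: "good_stats K \<delta> s n"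
    and bd: "\<forall>p\<in>pairs. \<bar>s (snd p) (fst p)\<bar> \<le> int (n (snd p) (fst p)) \<and> n (snd p) (fst p) \<le> length Rs"
    using ok unfolding OKs_def by auto
  from set_br_step[OF mem] obtain \<omega> where Rr: "R \<in> set_pmf (randomize \<delta> K h s n Rb)"
    and st: "(s', n', Rb') = stp \<delta> K h s n Rb R \<omega>" unfolding h_def by blast
  have R: "is_list K R" by (rule randomize_ok(1)[OF Rb h Rr])
  show "real (card (inv_pairs K R)) \<le> real (card (inv_pairs K R0)) + real K / 2"
    using randomize_ok(2)[OF Rb h Rr] cRb by linarith
  obtain s1 n1 where f: "fold (upd_pair h R (clicks R \<omega>)) [1..<(K - h) div 2 + 1] (s, n) = (s1, n1)" by fastforce
  have e: "s' = s1" "n' = n1" "Rb' = fold (bubble_step \<delta> s1 n1) [1..<K] Rb"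
    using st unfolding stp_def Let_def f by simp_all
  show "\<forall>p\<in>pairs. \<bar>s' (snd p) (fst p)\<bar> \<le> int (n' (snd p) (fst p)) \<and> n' (snd p) (fst p) \<le> length Rs + 1"
  proof
    fix p assume p: "p \<in> pairs"
    obtain a b where ab: "p = (a, b)" "1 \<le> a" "a < b" "b \<le> K" using p unfolding pairs_def by auto
    have ab': "a \<in> {1..K}" "b \<in> {1..K}" "a \<noteq> b" using ab by auto
    have b0: "\<bar>s b a\<bar> \<le> int (n b a)" "n b a \<le> length Rs" using bd p ab(1) by auto
    have u1: "s1 b a = s b a + (if adj K h R a b then of_bool (clicks R \<omega> (pos R b)) - of_bool (clicks R \<omega> (pos R a)) else 0)"
      by (rule upd_pair_adj(1)[OF R h ab' f])
    have u2: "n1 b a = n b a + (if adj K h R a b \<and> clicks R \<omega> (pos R b) \<noteq> clicks R \<omega> (pos R a) then 1 else 0)"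
      by (rule upd_pair_adj(2)[OF R h ab' f])
    have "\<bar>s1 b a\<bar> \<le> int (n1 b a) \<and> n1 b a \<le> length Rs + 1"
      unfolding u1 u2 using b0
      by (cases "adj K h R a b"; cases "clicks R \<omega> (pos R b)"; cases "clicks R \<omega> (pos R a)") auto
    then show "\<bar>s' (snd p) (fst p)\<bar> \<le> int (n' (snd p) (fst p)) \<and> n' (snd p) (fst p) \<le> length Rs + 1"
      unfolding e ab(1) by simp
  qed
  assume g': "good_stats K \<delta> s' n'"
  have "is_list K Rb' \<and> inv_pairs K Rb' \<subseteq> inv_pairs K Rb"
    unfolding e by (rule bubble_fold_ok) (use g' Rb e in auto)
  moreover then have "card (inv_pairs K Rb') \<le> card (inv_pairs K Rb)"
    using finite_inv by (intro card_mono) auto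
  ultimately show "is_list K Rb' \<and> card (inv_pairs K Rb') \<le> card (inv_pairs K R0)" using cRb by simp
qed

lemma B_step:
  assumes len: "length Rs + 1 \<le> N"
  shows "(\<integral>\<^sup>+y. ennreal (Bf N R0 (Rs @ [fst y], snd y)) \<partial>br_step \<alpha> DX \<delta> K t (s, n, Rb))
     \<le> ennreal (Bf N R0 (Rs, s, n, Rb))"
proof -
  let ?M = "br_step \<alpha> DX \<delta> K t (s, n, Rb)"
  have le1: "(\<integral>\<^sup>+y. ennreal (Bf N R0 (Rs @ [fst y], snd y)) \<partial>?M) \<le> 1"
  proof -
    have "(\<integral>\<^sup>+y. ennreal (Bf N R0 (Rs @ [fst y], snd y)) \<partial>?M) \<le> (\<integral>\<^sup>+y. 1 \<partial>?M)"
      by (rule nn_integral_mono) (use Bf_le1 in auto)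
    also have "\<dots> = 1" by (simp add: measure_pmf.emeasure_space_1)
    finally show ?thesis .
  qed
  show ?thesis
  proof (cases "OKs R0 Rs s n Rb")
    case False
    then show ?thesis using le1 unfolding Bf_def by simp
  next
    case True
    have Rb: "is_list K Rb" and g: "good_stats K \<delta> s n" using True unfolding OKs_def by auto
    have pw: "ennreal (Bf N R0 (Rs @ [fst y], snd y)) \<le> ennreal (Phi N (fst (snd y)) (fst (snd (snd y))))"
      if y: "y \<in> set_pmf ?M" for y
    proof -
      obtain R s' n' Rb' where ye: "y = (R, s', n', Rb')" by (cases y) auto
      have mem: "(R, s', n', Rb') \<in> set_pmf ?M" using y ye by simp
      note d = step_det[OF True mem]
      have "Bf N R0 (Rs @ [R], s', n', Rb') \<le> Phi N s' n'"
      proof (cases "good_stats K \<delta> s' n'")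
        case True
        have "OKs R0 (Rs @ [R]) s' n' Rb'"
          unfolding OKs_def using d(1) d(2) d(3)[OF True] True \<open>OKs R0 Rs s n Rb\<close> unfolding OKs_def by auto
        then show ?thesis unfolding Bf_def by simp
      next
        case False
        have "1 \<le> Phi N s' n'"
          by (rule Phi_big[OF _ False]) (use d(2) len in force)
        then show ?thesis using Bf_le1[of N R0 "(Rs @ [R], s', n', Rb')"] by linarith
      qed
      then show ?thesis unfolding ye by (simp add: ennreal_leI)
    qed
    have "(\<integral>\<^sup>+y. ennreal (Bf N R0 (Rs @ [fst y], snd y)) \<partial>?M)
        \<le> (\<integral>\<^sup>+y. ennreal (Phi N (fst (snd y)) (fst (snd (snd y)))) \<partial>?M)"
      by (rule nn_integral_mono_AE) (use pw in \<open>auto simp: AE_measure_pmf_iff\<close>)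
    also have "\<dots> \<le> ennreal (Phi N s n)" by (rule Phi_step[OF Rb g])
    finally have lp: "(\<integral>\<^sup>+y. ennreal (Bf N R0 (Rs @ [fst y], snd y)) \<partial>?M) \<le> ennreal (Phi N s n)" .
    have "Bf N R0 (Rs, s, n, Rb) = min 1 (Phi N s n)" unfolding Bf_def using True by simp
    then show ?thesis using le1 lp by (cases "Phi N s n \<le> 1") (simp_all add: min_def)
  qed
qed

lemma run_len: "x \<in> set_pmf (br_run \<alpha> DX \<delta> K R0 t) \<Longrightarrow> length (fst x) = t"
proof (induction t arbitrary: x)
  case 0 then show ?case by simp
next
  case (Suc t)
  then show ?case by (auto simp: split_beta)
qed

lemma run_bound:
  assumes R0: "is_list K R0"
  shows "t \<le> N \<Longrightarrow> (\<integral>\<^sup>+x. ennreal (Bf N R0 x) \<partial>br_run \<alpha> DX \<delta> K R0 t) \<le> ennreal (Phi N (\<lambda>_ _. 0) (\<lambda>_ _. 0))"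
proof (induction t)
  case 0
  have ok: "OKs R0 [] (\<lambda>_ _. 0) (\<lambda>_ _. 0) R0"
    unfolding OKs_def good_stats_def conf_rad_def using R0 by simp
  have "Bf N R0 ([], (\<lambda>_ _. 0), (\<lambda>_ _. 0), R0) \<le> Phi N (\<lambda>_ _. 0) (\<lambda>_ _. 0)"
    unfolding Bf_def using ok by simp
  then show ?case by (simp add: ennreal_leI)
next
  case (Suc t)
  have "(\<integral>\<^sup>+x. ennreal (Bf N R0 x) \<partial>br_run \<alpha> DX \<delta> K R0 (Suc t))
     = (\<integral>\<^sup>+z. \<integral>\<^sup>+y. ennreal (Bf N R0 (fst z @ [fst y], snd y)) \<partial>br_step \<alpha> DX \<delta> K (Suc t) (snd z) \<partial>br_run \<alpha> DX \<delta> K R0 t)"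
    by (simp add: nn_integral_map_pmf split_beta)
  also have "\<dots> \<le> (\<integral>\<^sup>+z. ennreal (Bf N R0 z) \<partial>br_run \<alpha> DX \<delta> K R0 t)"
  proof (rule nn_integral_mono_AE)
    show "AE z in br_run \<alpha> DX \<delta> K R0 t. (\<integral>\<^sup>+y. ennreal (Bf N R0 (fst z @ [fst y], snd y)) \<partial>br_step \<alpha> DX \<delta> K (Suc t) (snd z))
       \<le> ennreal (Bf N R0 z)"
      unfolding AE_measure_pmf_iff
    proof
      fix z assume z: "z \<in> set_pmf (br_run \<alpha> DX \<delta> K R0 t)"
      obtain Rs s n Rb where ze: "z = (Rs, s, n, Rb)" by (cases z) auto
      have "length Rs = t" using run_len[OF z] ze by simp
      then have len: "length Rs + 1 \<le> N" using Suc.prems by simp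
      show "(\<integral>\<^sup>+y. ennreal (Bf N R0 (fst z @ [fst y], snd y)) \<partial>br_step \<alpha> DX \<delta> K (Suc t) (snd z))
       \<le> ennreal (Bf N R0 z)" unfolding ze fst_conv snd_conv by (rule B_step[OF len])
    qed
  qed
  also have "\<dots> \<le> ennreal (Phi N (\<lambda>_ _. 0) (\<lambda>_ _. 0))" by (rule Suc.IH) (use Suc.prems in simp)
  finally show ?case .
qed

end


context br_env
begin

lemma main_bound:
  assumes R0: "is_list K R0"
  shows "measure_pmf.prob (displayed \<alpha> DX \<delta> K R0 N)
           {Rs. \<forall>R \<in> set Rs. real (card (inv_pairs K R)) \<le> real (card (inv_pairs K R0)) + real K / 2}
         \<ge> 1 - sqrt \<delta> * real K ^ 2 * real N"
proof -
  define Good where "Good = {Rs. \<forall>R \<in> set Rs. real (card (inv_pairs K R)) \<le> real (card (inv_pairs K R0)) + real K / 2}"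
  let ?M = "br_run \<alpha> DX \<delta> K R0 N"
  define Bad :: "(nat list list \<times> br_state) set" where "Bad = {x. fst x \<notin> Good}"
  have "emeasure (measure_pmf ?M) Bad = (\<integral>\<^sup>+x. indicator Bad x \<partial>?M)"
    by (rule nn_integral_indicator[symmetric]) simp
  also have "\<dots> \<le> (\<integral>\<^sup>+x. ennreal (Bf N R0 x) \<partial>?M)"
  proof (rule nn_integral_mono)
    fix x :: "nat list list \<times> br_state"
    show "indicator Bad x \<le> ennreal (Bf N R0 x)"
    proof (cases "x \<in> Bad")
      case True
      obtain Rs s n Rb where xe: "x = (Rs, s, n, Rb)" by (cases x) auto
      have "\<not> OKs R0 Rs s n Rb" using True unfolding xe Bad_def Good_def OKs_def by auto
      then have "Bf N R0 x = 1" unfolding xe Bf_def by simp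
      then show ?thesis using True by (simp add: indicator_def)
    next
      case False
      then show ?thesis by (simp add: indicator_def)
    qed
  qed
  also have "\<dots> \<le> ennreal (Phi N (\<lambda>_ _. 0) (\<lambda>_ _. 0))" by (rule run_bound[OF R0]) simp
  finally have "emeasure (measure_pmf ?M) Bad \<le> ennreal (Phi N (\<lambda>_ _. 0) (\<lambda>_ _. 0))" .
  then have mb: "measure_pmf.prob ?M Bad \<le> Phi N (\<lambda>_ _. 0) (\<lambda>_ _. 0)"
    using Phi_nonneg by (simp add: measure_pmf.emeasure_eq_measure)
  have "measure_pmf.prob (displayed \<alpha> DX \<delta> K R0 N) Good = measure_pmf.prob ?M (fst -` Good)"
    unfolding displayed_def measure_map_pmf ..
  also have "fst -` Good = UNIV - Bad" unfolding Bad_def by auto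
  also have "measure_pmf.prob ?M (UNIV - Bad) = 1 - measure_pmf.prob ?M Bad"
    using measure_pmf.prob_compl[of Bad ?M] by simp
  finally have pg: "measure_pmf.prob (displayed \<alpha> DX \<delta> K R0 N) Good = 1 - measure_pmf.prob ?M Bad" .
  have ds: "\<delta> \<le> sqrt \<delta>"
  proof -
    have "\<delta>^2 \<le> \<delta>" using \<delta>0 \<delta>1 by (simp add: power2_eq_square mult_le_cancel_right1 less_imp_le)
    then show ?thesis by (rule real_le_rsqrt)
  qed
  have "\<delta> * real K ^ 2 * real N \<le> sqrt \<delta> * real K ^ 2 * real N"
    using ds by (intro mult_right_mono) auto
  then show ?thesis unfolding Good_def[symmetric] pg using mb Phi0[of N] by linarith
qed

end

theorem lemma1:
  fixes K n :: nat and \<alpha> :: "nat \<Rightarrow> real" and DX :: "(nat list \<Rightarrow> nat \<Rightarrow> bool) pmf"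
    and \<delta> :: real and R0 :: "nat list"
  assumes "0 < \<delta>" and "\<delta> < 1"
    and "is_list K R0"
    and "\<And>i j. 1 \<le> i \<Longrightarrow> i < j \<Longrightarrow> j \<le> K \<Longrightarrow> \<alpha> i > \<alpha> j"
    and "\<And>i. i \<in> {1..K} \<Longrightarrow> 0 < \<alpha> i \<and> \<alpha> i \<le> 1"
    and "click_assms K \<alpha> DX"
  shows "measure_pmf.prob (displayed \<alpha> DX \<delta> K R0 n)
           {Rs. \<forall>R \<in> set Rs. real (card (inv_pairs K R)) \<le> real (card (inv_pairs K R0)) + real K / 2}
         \<ge> 1 - sqrt \<delta> * real K ^ 2 * real n"
proof -
  interpret br_env K \<alpha> DX \<delta>
    by unfold_locales (use assms in auto)
  show ?thesis by (rule main_bound[OF assms(3)])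
qed


end
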